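(* Let $\mathbb{C}$ be a regular Mal'tsev category. Then $\mathbb{C}$ is congruence distributive if and only if $\mathbb{C}$ is a majority category.
   Context: A category is regular if it has finite limits and coequalizers of kernel pairs and regular epimorphisms are pullback-stable. A finitely complete category is Mal'tsev if every reflexive relation (subobject of $X\times X$ containing the diagonal) is an equivalence relation. In a regular Mal'tsev category, for equivalence relations $\alpha,\beta$ on $X$ the join in the poset of equivalence relations on $X$ exists and equals the relational composite $\alpha\circ\beta$, where the composite of relations represented by $(r_1,r_2):R_0\to X\times X$ and $(s_1,s_2):S_0\to X\times X$ is the image (regular epi–mono factorization) of $(r_1p_1,s_2p_2):P\to X\times X$, $(P,p_1,p_2)$ the pullback of $s_1$ along $r_2$. $\mathbb{C}$ is congruence distributive if for every object $X$ the lattice of equivalence relations on $X$ is distributive. For $w:S\to W$ and subobject $A$ of $W$, $w\in_S A$ means $w$ factors through a representative of $A$. A ternary relation $R\leqslant X\times Y\times Z$ is majority-selecting if for all $S$ and $x,x':S\to X$, $y,y':S\to Y$, $z,z':S\to Z$: $(x,y,z')\in_S R$, $(x,y',z)\in_S R$, $(x',y,z)\in_S R$ imply $(x,y,z)\in_S R$; a majority category is one in which every ternary relation is majority-selecting. *)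

theory Defs
  imports Main
begin

record ('o, 'm) category =
  Obj :: "'o set"
  Arr :: "'m set"
  Dom :: "'m \<Rightarrow> 'o"
  Cod :: "'m \<Rightarrow> 'o"
  Idm :: "'o \<Rightarrow> 'm"
  Comp :: "'m \<Rightarrow> 'm \<Rightarrow> 'm"   (* Comp C g f = g o f *)

definition hom :: "('o,'m) category \<Rightarrow> 'm \<Rightarrow> 'o \<Rightarrow> 'o \<Rightarrow> bool" where
  "hom C f X Y \<longleftrightarrow> f \<in> Arr C \<and> Dom C f = X \<and> Cod C f = Y"

definition is_category :: "('o,'m) category \<Rightarrow> bool" where
  "is_category C \<longleftrightarrow>
     (\<forall>f\<in>Arr C. Dom C f \<in> Obj C \<and> Cod C f \<in> Obj C) \<and>
     (\<forall>X\<in>Obj C. hom C (Idm C X) X X) \<and>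
     (\<forall>f g. f \<in> Arr C \<and> g \<in> Arr C \<and> Cod C f = Dom C g \<longrightarrow>
            hom C (Comp C g f) (Dom C f) (Cod C g)) \<and>
     (\<forall>f\<in>Arr C. Comp C f (Idm C (Dom C f)) = f \<and> Comp C (Idm C (Cod C f)) f = f) \<and>
     (\<forall>f g h. f \<in> Arr C \<and> g \<in> Arr C \<and> h \<in> Arr C \<and> Cod C f = Dom C g \<and> Cod C g = Dom C h
            \<longrightarrow> Comp C h (Comp C g f) = Comp C (Comp C h g) f)"

definition is_terminal :: "('o,'m) category \<Rightarrow> 'o \<Rightarrow> bool" where
  "is_terminal C T \<longleftrightarrow> T \<in> Obj C \<and> (\<forall>X\<in>Obj C. \<exists>!f. hom C f X T)"

definition is_pullback :: "('o,'m) category \<Rightarrow> 'm \<Rightarrow> 'm \<Rightarrow> 'm \<Rightarrow> 'm \<Rightarrow> bool" where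
  "is_pullback C f g p q \<longleftrightarrow>
     f \<in> Arr C \<and> g \<in> Arr C \<and> Cod C f = Cod C g \<and>
     hom C p (Dom C q) (Dom C f) \<and> hom C q (Dom C p) (Dom C g) \<and>
     Comp C f p = Comp C g q \<and>
     (\<forall>W u v. hom C u W (Dom C f) \<and> hom C v W (Dom C g) \<and> Comp C f u = Comp C g v \<longrightarrow>
        (\<exists>!h. hom C h W (Dom C p) \<and> Comp C p h = u \<and> Comp C q h = v))"

definition has_finite_limits :: "('o,'m) category \<Rightarrow> bool" where
  "has_finite_limits C \<longleftrightarrow>
     (\<exists>T. is_terminal C T) \<and>
     (\<forall>f g. f \<in> Arr C \<and> g \<in> Arr C \<and> Cod C f = Cod C g \<longrightarrow> (\<exists>p q. is_pullback C f g p q))"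

definition is_coequalizer :: "('o,'m) category \<Rightarrow> 'm \<Rightarrow> 'm \<Rightarrow> 'm \<Rightarrow> bool" where
  "is_coequalizer C f g e \<longleftrightarrow>
     f \<in> Arr C \<and> g \<in> Arr C \<and> Dom C f = Dom C g \<and> Cod C f = Cod C g \<and>
     e \<in> Arr C \<and> Dom C e = Cod C f \<and> Comp C e f = Comp C e g \<and>
     (\<forall>Y h. hom C h (Cod C f) Y \<and> Comp C h f = Comp C h g \<longrightarrow>
        (\<exists>!k. hom C k (Cod C e) Y \<and> Comp C k e = h))"

definition regular_epi :: "('o,'m) category \<Rightarrow> 'm \<Rightarrow> bool" where
  "regular_epi C e \<longleftrightarrow> (\<exists>f g. is_coequalizer C f g e)"

definition is_regular :: "('o,'m) category \<Rightarrow> bool" where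
  "is_regular C \<longleftrightarrow>
     has_finite_limits C \<and>
     (\<forall>f p q. is_pullback C f f p q \<longrightarrow> (\<exists>e. is_coequalizer C p q e)) \<and>
     (\<forall>f g p q. is_pullback C f g p q \<and> regular_epi C f \<longrightarrow> regular_epi C q)"

section \<open>Relations (subobjects of products, presented as jointly monic spans)\<close>

definition rel2 :: "('o,'m) category \<Rightarrow> 'm \<times> 'm \<Rightarrow> 'o \<Rightarrow> 'o \<Rightarrow> bool" where
  "rel2 C R X Y \<longleftrightarrow> (case R of (r1, r2) \<Rightarrow>
     hom C r1 (Dom C r1) X \<and> hom C r2 (Dom C r1) Y \<and>
     (\<forall>W u v. hom C u W (Dom C r1) \<and> hom C v W (Dom C r1) \<and>
        Comp C r1 u = Comp C r1 v \<and> Comp C r2 u = Comp C r2 v \<longrightarrow> u = v))"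

definition rel3 :: "('o,'m) category \<Rightarrow> 'm \<times> 'm \<times> 'm \<Rightarrow> 'o \<Rightarrow> 'o \<Rightarrow> 'o \<Rightarrow> bool" where
  "rel3 C R X Y Z \<longleftrightarrow> (case R of (r1, r2, r3) \<Rightarrow>
     hom C r1 (Dom C r1) X \<and> hom C r2 (Dom C r1) Y \<and> hom C r3 (Dom C r1) Z \<and>
     (\<forall>W u v. hom C u W (Dom C r1) \<and> hom C v W (Dom C r1) \<and>
        Comp C r1 u = Comp C r1 v \<and> Comp C r2 u = Comp C r2 v \<and> Comp C r3 u = Comp C r3 v
        \<longrightarrow> u = v))"

definition rel_le :: "('o,'m) category \<Rightarrow> 'm \<times> 'm \<Rightarrow> 'm \<times> 'm \<Rightarrow> bool" where
  "rel_le C R S \<longleftrightarrow> (case R of (r1, r2) \<Rightarrow> case S of (s1, s2) \<Rightarrow>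
     (\<exists>u. hom C u (Dom C r1) (Dom C s1) \<and> Comp C s1 u = r1 \<and> Comp C s2 u = r2))"

definition mem3 :: "('o,'m) category \<Rightarrow> 'o \<Rightarrow> 'm \<times> 'm \<times> 'm \<Rightarrow> 'm \<times> 'm \<times> 'm \<Rightarrow> bool" where
  "mem3 C S w R \<longleftrightarrow> (case w of (x, y, z) \<Rightarrow> case R of (r1, r2, r3) \<Rightarrow>
     (\<exists>u. hom C u S (Dom C r1) \<and> Comp C r1 u = x \<and> Comp C r2 u = y \<and> Comp C r3 u = z))"

definition reflexive_rel :: "('o,'m) category \<Rightarrow> 'o \<Rightarrow> 'm \<times> 'm \<Rightarrow> bool" where
  "reflexive_rel C X R \<longleftrightarrow> (case R of (r1, r2) \<Rightarrow>
     (\<exists>d. hom C d X (Dom C r1) \<and> Comp C r1 d = Idm C X \<and> Comp C r2 d = Idm C X))"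

definition symmetric_rel :: "('o,'m) category \<Rightarrow> 'm \<times> 'm \<Rightarrow> bool" where
  "symmetric_rel C R \<longleftrightarrow> rel_le C (snd R, fst R) R"

text \<open>Transitive: the relational composite R o R is contained in R, i.e.
  (r1 p1, r2 p2) factors through R, where (P,p1,p2) is the pullback of r1 along r2.\<close>
definition transitive_rel :: "('o,'m) category \<Rightarrow> 'm \<times> 'm \<Rightarrow> bool" where
  "transitive_rel C R \<longleftrightarrow> (case R of (r1, r2) \<Rightarrow>
     (\<forall>p1 p2. is_pullback C r2 r1 p1 p2 \<longrightarrow>
        (\<exists>t. hom C t (Dom C p1) (Dom C r1) \<and>
             Comp C r1 t = Comp C r1 p1 \<and> Comp C r2 t = Comp C r2 p2)))"

definition equiv_rel :: "('o,'m) category \<Rightarrow> 'o \<Rightarrow> 'm \<times> 'm \<Rightarrow> bool" where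
  "equiv_rel C X R \<longleftrightarrow> rel2 C R X X \<and> reflexive_rel C X R \<and> symmetric_rel C R \<and> transitive_rel C R"

definition is_maltsev :: "('o,'m) category \<Rightarrow> bool" where
  "is_maltsev C \<longleftrightarrow> has_finite_limits C \<and>
     (\<forall>X\<in>Obj C. \<forall>R. rel2 C R X X \<and> reflexive_rel C X R \<longrightarrow> equiv_rel C X R)"

definition is_eq_meet :: "('o,'m) category \<Rightarrow> 'o \<Rightarrow> 'm \<times> 'm \<Rightarrow> 'm \<times> 'm \<Rightarrow> 'm \<times> 'm \<Rightarrow> bool" where
  "is_eq_meet C X A B M \<longleftrightarrow> equiv_rel C X M \<and> rel_le C M A \<and> rel_le C M B \<and>
     (\<forall>N. equiv_rel C X N \<and> rel_le C N A \<and> rel_le C N B \<longrightarrow> rel_le C N M)"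

definition is_eq_join :: "('o,'m) category \<Rightarrow> 'o \<Rightarrow> 'm \<times> 'm \<Rightarrow> 'm \<times> 'm \<Rightarrow> 'm \<times> 'm \<Rightarrow> bool" where
  "is_eq_join C X A B J \<longleftrightarrow> equiv_rel C X J \<and> rel_le C A J \<and> rel_le C B J \<and>
     (\<forall>N. equiv_rel C X N \<and> rel_le C A N \<and> rel_le C B N \<longrightarrow> rel_le C J N)"

text \<open>The poset of equivalence relations on every object X is a distributive lattice:
  binary meets and joins exist and A \<and> (B \<or> D) \<le> (A \<and> B) \<or> (A \<and> D)
  (the reverse inequality holds in every lattice).\<close>
definition congruence_distributive :: "('o,'m) category \<Rightarrow> bool" where
  "congruence_distributive C \<longleftrightarrow>
     (\<forall>X\<in>Obj C.
       (\<forall>A B. equiv_rel C X A \<and> equiv_rel C X B \<longrightarrow>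
          (\<exists>M. is_eq_meet C X A B M) \<and> (\<exists>J. is_eq_join C X A B J)) \<and>
       (\<forall>A B D J M M1 M2 J'.
          equiv_rel C X A \<and> equiv_rel C X B \<and> equiv_rel C X D \<and>
          is_eq_join C X B D J \<and> is_eq_meet C X A J M \<and>
          is_eq_meet C X A B M1 \<and> is_eq_meet C X A D M2 \<and> is_eq_join C X M1 M2 J'
          \<longrightarrow> rel_le C M J'))"

definition majority_selecting ::
  "('o,'m) category \<Rightarrow> 'm \<times> 'm \<times> 'm \<Rightarrow> 'o \<Rightarrow> 'o \<Rightarrow> 'o \<Rightarrow> bool" where
  "majority_selecting C R X Y Z \<longleftrightarrow>
     (\<forall>S x x' y y' z z'. S \<in> Obj C \<and>
        hom C x S X \<and> hom C x' S X \<and> hom C y S Y \<and> hom C y' S Y \<and> hom C z S Z \<and> hom C z' S Z \<and>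
        mem3 C S (x, y, z') R \<and> mem3 C S (x, y', z) R \<and> mem3 C S (x', y, z) R
        \<longrightarrow> mem3 C S (x, y, z) R)"

definition is_majority :: "('o,'m) category \<Rightarrow> bool" where
  "is_majority C \<longleftrightarrow>
     (\<forall>X\<in>Obj C. \<forall>Y\<in>Obj C. \<forall>Z\<in>Obj C. \<forall>R. rel3 C R X Y Z \<longrightarrow> majority_selecting C R X Y Z)"

end

theory Submission
  imports Defs
begin

locale rcat =
  fixes C :: "('o,'m) category"
  assumes cat: "is_category C"
begin

abbreviation cmp (infixr "\<cdot>" 75) where "g \<cdot> f \<equiv> Comp C g f"

lemma homD: "hom C f X Y \<Longrightarrow> f \<in> Arr C \<and> Dom C f = X \<and> Cod C f = Y"
  by (simp add: hom_def)

lemma cat_ax: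
  shows ax1: "\<forall>f\<in>Arr C. Dom C f \<in> Obj C \<and> Cod C f \<in> Obj C"
  and ax2: "\<forall>X\<in>Obj C. hom C (Idm C X) X X"
  and ax3: "\<forall>f g. f \<in> Arr C \<and> g \<in> Arr C \<and> Cod C f = Dom C g \<longrightarrow>
            hom C (Comp C g f) (Dom C f) (Cod C g)"
  and ax4: "\<forall>f\<in>Arr C. Comp C f (Idm C (Dom C f)) = f \<and> Comp C (Idm C (Cod C f)) f = f"
  and ax5: "\<forall>f g h. f \<in> Arr C \<and> g \<in> Arr C \<and> h \<in> Arr C \<and> Cod C f = Dom C g \<and> Cod C g = Dom C h
            \<longrightarrow> Comp C h (Comp C g f) = Comp C (Comp C h g) f"
  using cat unfolding is_category_def by auto

lemma hom_obj: "hom C f X Y \<Longrightarrow> X \<in> Obj C \<and> Y \<in> Obj C"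
  using ax1 unfolding hom_def by auto

lemma comp_hom: "hom C f X Y \<Longrightarrow> hom C g Y Z \<Longrightarrow> hom C (g \<cdot> f) X Z"
  using ax3 unfolding hom_def by auto

lemma id_hom: "X \<in> Obj C \<Longrightarrow> hom C (Idm C X) X X"
  using ax2 by auto

lemma id_l[simp]: "hom C f X Y \<Longrightarrow> Idm C Y \<cdot> f = f"
  using ax4 unfolding hom_def by auto

lemma id_r[simp]: "hom C f X Y \<Longrightarrow> f \<cdot> Idm C X = f"
  using ax4 unfolding hom_def by auto

lemma assoc: "hom C f X Y \<Longrightarrow> hom C g Y Z \<Longrightarrow> hom C h Z V \<Longrightarrow> h \<cdot> (g \<cdot> f) = (h \<cdot> g) \<cdot> f"
  using ax5 unfolding hom_def by auto

lemma comp_homD: "f \<in> Arr C \<Longrightarrow> g \<in> Arr C \<Longrightarrow> Cod C f = Dom C g \<Longrightarrow> hom C (g \<cdot> f) (Dom C f) (Cod C g)"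
  using ax3 by blast
lemma arr_comp[simp]: "f \<in> Arr C \<Longrightarrow> g \<in> Arr C \<Longrightarrow> Cod C f = Dom C g \<Longrightarrow> g \<cdot> f \<in> Arr C"
  using comp_homD unfolding hom_def by blast
lemma dom_comp[simp]: "f \<in> Arr C \<Longrightarrow> g \<in> Arr C \<Longrightarrow> Cod C f = Dom C g \<Longrightarrow> Dom C (g \<cdot> f) = Dom C f"
  using comp_homD unfolding hom_def by blast
lemma cod_comp[simp]: "f \<in> Arr C \<Longrightarrow> g \<in> Arr C \<Longrightarrow> Cod C f = Dom C g \<Longrightarrow> Cod C (g \<cdot> f) = Cod C g"
  using comp_homD unfolding hom_def by blast
lemma assoc_r[simp]: "f \<in> Arr C \<Longrightarrow> g \<in> Arr C \<Longrightarrow> h \<in> Arr C \<Longrightarrow> Cod C f = Dom C g \<Longrightarrow> Cod C g = Dom C h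
   \<Longrightarrow> (h \<cdot> g) \<cdot> f = h \<cdot> (g \<cdot> f)"
  using ax5 by metis

lemma eq_ext: "a \<cdot> b = c \<cdot> d \<Longrightarrow> hom C z W X \<Longrightarrow> hom C b X Y \<Longrightarrow> hom C a Y Z \<Longrightarrow> hom C d X Y'
   \<Longrightarrow> hom C c Y' Z \<Longrightarrow> a \<cdot> (b \<cdot> z) = c \<cdot> (d \<cdot> z)"
proof -
  assume e: "a \<cdot> b = c \<cdot> d" and z: "hom C z W X" and b: "hom C b X Y" and a: "hom C a Y Z"
    and d: "hom C d X Y'" and c: "hom C c Y' Z"
  have "a \<cdot> (b \<cdot> z) = (a \<cdot> b) \<cdot> z" by (rule assoc[OF z b a])
  also have "\<dots> = (c \<cdot> d) \<cdot> z" using e by simp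
  also have "\<dots> = c \<cdot> (d \<cdot> z)" by (rule assoc[OF z d c, symmetric])
  finally show ?thesis .
qed

lemma ex1_uniq: "\<exists>!x. P x \<Longrightarrow> P a \<Longrightarrow> P b \<Longrightarrow> a = b" by blast

lemma pbp1: "is_pullback C f g p q \<Longrightarrow> f \<in> Arr C"
  unfolding is_pullback_def by (elim conjE) assumption

lemma pbp2: "is_pullback C f g p q \<Longrightarrow> g \<in> Arr C"
  unfolding is_pullback_def by (elim conjE) assumption

lemma pbp3: "is_pullback C f g p q \<Longrightarrow> Cod C f = Cod C g"
  unfolding is_pullback_def by (elim conjE) assumption

lemma pbp4: "is_pullback C f g p q \<Longrightarrow> hom C p (Dom C q) (Dom C f)"
  unfolding is_pullback_def by (elim conjE) assumption

lemma pbp5: "is_pullback C f g p q \<Longrightarrow> hom C q (Dom C p) (Dom C g)"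
  unfolding is_pullback_def by (elim conjE) assumption

lemma pbp6: "is_pullback C f g p q \<Longrightarrow> f \<cdot> p = g \<cdot> q"
  unfolding is_pullback_def by (elim conjE) assumption

lemma pbp7: "is_pullback C f g p q \<Longrightarrow> \<forall>W u v. hom C u W (Dom C f) \<and> hom C v W (Dom C g) \<and> f \<cdot> u = g \<cdot> v \<longrightarrow>
        (\<exists>!h. hom C h W (Dom C p) \<and> p \<cdot> h = u \<and> q \<cdot> h = v)"
  unfolding is_pullback_def by (elim conjE) assumption

lemma pbD:
  assumes pb: "is_pullback C f g p q"
  shows "hom C p (Dom C p) (Dom C f)" "hom C q (Dom C p) (Dom C g)" "f \<cdot> p = g \<cdot> q"
    "hom C f (Dom C f) (Cod C f)" "hom C g (Dom C g) (Cod C f)"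
proof -
  have d: "Dom C q = Dom C p" using pbp5[OF pb] unfolding hom_def by simp
  show "hom C p (Dom C p) (Dom C f)" using pbp4[OF pb] d by simp
  show "hom C q (Dom C p) (Dom C g)" using pbp5[OF pb] by simp
  show "f \<cdot> p = g \<cdot> q" using pbp6[OF pb] .
  show "hom C f (Dom C f) (Cod C f)" using pbp1[OF pb] unfolding hom_def by simp
  show "hom C g (Dom C g) (Cod C f)" using pbp2[OF pb] pbp3[OF pb] unfolding hom_def by simp
qed

lemma pb_lift:
  assumes pb: "is_pullback C f g p q" and u: "hom C u W (Dom C f)" and v: "hom C v W (Dom C g)"
    and e: "f \<cdot> u = g \<cdot> v"
  obtains h where "hom C h W (Dom C p)" "p \<cdot> h = u" "q \<cdot> h = v"
proof -
  have "\<exists>!h. hom C h W (Dom C p) \<and> p \<cdot> h = u \<and> q \<cdot> h = v"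
    using pbp7[OF pb, rule_format, OF conjI[OF u conjI[OF v e]]] .
  then have "\<exists>h. hom C h W (Dom C p) \<and> p \<cdot> h = u \<and> q \<cdot> h = v" by (rule ex1_implies_ex)
  then show ?thesis using that by blast
qed

lemma pb_uniq:
  assumes pb: "is_pullback C f g p q" and h: "hom C h W (Dom C p)" and h': "hom C h' W (Dom C p)"
    and e1: "p \<cdot> h = p \<cdot> h'" and e2: "q \<cdot> h = q \<cdot> h'"
  shows "h = h'"
proof -
  note D = pbD[OF pb]
  have u: "hom C (p \<cdot> h) W (Dom C f)" by (rule comp_hom[OF h D(1)])
  have v: "hom C (q \<cdot> h) W (Dom C g)" by (rule comp_hom[OF h D(2)])
  have "f \<cdot> (p \<cdot> h) = (f \<cdot> p) \<cdot> h" by (rule assoc[OF h D(1) D(4)])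
  also have "\<dots> = (g \<cdot> q) \<cdot> h" using D(3) by simp
  also have "\<dots> = g \<cdot> (q \<cdot> h)" by (rule assoc[OF h D(2) D(5), symmetric])
  finally have e: "f \<cdot> (p \<cdot> h) = g \<cdot> (q \<cdot> h)" .
  have "\<exists>!k. hom C k W (Dom C p) \<and> p \<cdot> k = p \<cdot> h \<and> q \<cdot> k = q \<cdot> h"
    using pbp7[OF pb, rule_format, OF conjI[OF u conjI[OF v e]]] .
  then show ?thesis by (rule ex1_uniq) (use h h' e1 e2 in auto)
qed

definition mono :: "'m \<Rightarrow> bool" where
  "mono m \<longleftrightarrow> (\<forall>W u v. hom C u W (Dom C m) \<and> hom C v W (Dom C m) \<and> m \<cdot> u = m \<cdot> v \<longrightarrow> u = v)"

lemma monoD: "mono m \<Longrightarrow> hom C u W (Dom C m) \<Longrightarrow> hom C v W (Dom C m) \<Longrightarrow> m \<cdot> u = m \<cdot> v \<Longrightarrow> u = v"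
  unfolding mono_def by blast

end

locale regcat = rcat +
  assumes reg: "is_regular C"
begin

lemma fl: "has_finite_limits C" using reg unfolding is_regular_def by blast

lemma pb_ex:
  assumes "hom C f A B" "hom C g B' B"
  obtains p q where "is_pullback C f g p q"
proof -
  have "f \<in> Arr C \<and> g \<in> Arr C \<and> Cod C f = Cod C g" using assms unfolding hom_def by simp
  then have "\<exists>p q. is_pullback C f g p q" using fl unfolding has_finite_limits_def by blast
  then show ?thesis using that by blast
qed

lemma prod_ex:
  assumes X: "X \<in> Obj C" and Y: "Y \<in> Obj C"
  obtains P p1 p2 where "hom C p1 P X" "hom C p2 P Y"
    "\<And>W u v. hom C u W X \<Longrightarrow> hom C v W Y \<Longrightarrow> \<exists>h. hom C h W P \<and> p1 \<cdot> h = u \<and> p2 \<cdot> h = v"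
    "\<And>W h h'. hom C h W P \<Longrightarrow> hom C h' W P \<Longrightarrow> p1 \<cdot> h = p1 \<cdot> h' \<Longrightarrow> p2 \<cdot> h = p2 \<cdot> h' \<Longrightarrow> h = h'"
proof -
  obtain T where T: "is_terminal C T" using fl unfolding has_finite_limits_def by blast
  have TU: "\<forall>X\<in>Obj C. \<exists>!f. hom C f X T" using T unfolding is_terminal_def by simp
  have "\<exists>tX. hom C tX X T" using TU X by (meson ex1_implies_ex)
  then obtain tX where tX: "hom C tX X T" by blast
  have "\<exists>tY. hom C tY Y T" using TU Y by (meson ex1_implies_ex)
  then obtain tY where tY: "hom C tY Y T" by blast
  obtain p q where pb: "is_pullback C tX tY p q" using pb_ex tX tY by blast
  note D = pbD[OF pb]
  have dx: "Dom C tX = X" and dy: "Dom C tY = Y" using tX tY homD by auto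
  show ?thesis
  proof (rule that[of p "Dom C p" q])
    show "hom C p (Dom C p) X" "hom C q (Dom C p) Y" using D dx dy by auto
  next
    fix W u v assume u: "hom C u W X" and v: "hom C v W Y"
    have W: "W \<in> Obj C" using u hom_obj by blast
    have a: "hom C (tX \<cdot> u) W T" by (rule comp_hom[OF u tX])
    have b: "hom C (tY \<cdot> v) W T" by (rule comp_hom[OF v tY])
    have "tX \<cdot> u = tY \<cdot> v" using TU W a b ex1_uniq by metis
    then obtain h where "hom C h W (Dom C p)" "p \<cdot> h = u" "q \<cdot> h = v"
      using pb_lift[OF pb] u v dx dy by metis
    then show "\<exists>h. hom C h W (Dom C p) \<and> p \<cdot> h = u \<and> q \<cdot> h = v" by blast
  next
    fix W h h' assume "hom C h W (Dom C p)" "hom C h' W (Dom C p)" "p \<cdot> h = p \<cdot> h'" "q \<cdot> h = q \<cdot> h'"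
    then show "h = h'" using pb_uniq[OF pb] by blast
  qed
qed

lemma repi_arr:
  assumes "regular_epi C e"
  shows "hom C e (Dom C e) (Cod C e)"
proof -
  obtain f g where "is_coequalizer C f g e" using assms unfolding regular_epi_def by blast
  then have "e \<in> Arr C" unfolding is_coequalizer_def by (elim conjE) assumption
  then show ?thesis unfolding hom_def by simp
qed

lemma coeq_parts:
  assumes co: "is_coequalizer C f g e"
  shows "hom C f (Dom C f) (Dom C e)" "hom C g (Dom C f) (Dom C e)" "hom C e (Dom C e) (Cod C e)"
    "e \<cdot> f = e \<cdot> g" "Cod C f = Dom C e"
    "\<forall>Y h. hom C h (Cod C f) Y \<and> h \<cdot> f = h \<cdot> g \<longrightarrow> (\<exists>!k. hom C k (Cod C e) Y \<and> k \<cdot> e = h)"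
proof -
  have A: "f \<in> Arr C \<and> g \<in> Arr C \<and> Dom C f = Dom C g \<and> Cod C f = Cod C g \<and>
     e \<in> Arr C \<and> Dom C e = Cod C f \<and> Comp C e f = Comp C e g" using co unfolding is_coequalizer_def
    by (elim conjE) (intro conjI; assumption)
  then show "hom C f (Dom C f) (Dom C e)" "hom C g (Dom C f) (Dom C e)" "hom C e (Dom C e) (Cod C e)"
    "e \<cdot> f = e \<cdot> g" "Cod C f = Dom C e" unfolding hom_def by simp_all
  show "\<forall>Y h. hom C h (Cod C f) Y \<and> h \<cdot> f = h \<cdot> g \<longrightarrow> (\<exists>!k. hom C k (Cod C e) Y \<and> k \<cdot> e = h)"
    using co unfolding is_coequalizer_def by (elim conjE) assumption
qed

lemma coeq_desc:
  assumes co: "is_coequalizer C f g e" and h: "hom C h (Dom C e) Y" and hf: "h \<cdot> f = h \<cdot> g"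
  obtains k where "hom C k (Cod C e) Y" "k \<cdot> e = h"
proof -
  note P = coeq_parts[OF co]
  have h': "hom C h (Cod C f) Y" using h P(5) by simp
  have "\<exists>!k. hom C k (Cod C e) Y \<and> k \<cdot> e = h" using P(6)[rule_format, OF conjI[OF h' hf]] .
  then have "\<exists>k. hom C k (Cod C e) Y \<and> k \<cdot> e = h" by (rule ex1_implies_ex)
  then show ?thesis using that by blast
qed

lemma repi_epi:
  assumes e: "regular_epi C e" and u: "hom C u (Cod C e) Y" and v: "hom C v (Cod C e) Y"
    and eq: "u \<cdot> e = v \<cdot> e"
  shows "u = v"
proof -
  obtain f g where co: "is_coequalizer C f g e" using e unfolding regular_epi_def by blast
  note P = coeq_parts[OF co]
  have h: "hom C (u \<cdot> e) (Cod C f) Y" using comp_hom[OF P(3) u] P(5) by simp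
  have "(u \<cdot> e) \<cdot> f = (u \<cdot> e) \<cdot> g"
    using assoc[OF P(1) P(3) u] assoc[OF P(2) P(3) u] P(4) by metis
  then have "\<exists>!k. hom C k (Cod C e) Y \<and> k \<cdot> e = u \<cdot> e"
    using P(6)[rule_format, OF conjI[OF h]] by blast
  then show ?thesis by (rule ex1_uniq) (use u v eq in auto)
qed

lemma repi_pb:
  assumes "regular_epi C e" "is_pullback C e g p q"
  shows "regular_epi C q"
  using reg assms unfolding is_regular_def by blast


lemma image:
  assumes f: "hom C f P Q"
  obtains I e m where "hom C e P I" "hom C m I Q" "m \<cdot> e = f" "regular_epi C e" "mono m"
proof -
  obtain k1 k2 where kp: "is_pullback C f f k1 k2" using pb_ex f f by blast
  obtain e where co: "is_coequalizer C k1 k2 e" using reg kp unfolding is_regular_def by blast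
  note K = pbD[OF kp] and P = coeq_parts[OF co]
  have dk: "Dom C f = P" "Cod C f = Q" using f homD by auto
  have de: "Dom C e = P" using K(1) P(1) dk unfolding hom_def by auto
  have fh: "hom C f (Dom C e) Q" using f de by simp
  have fk: "f \<cdot> k1 = f \<cdot> k2" using K(3) .
  obtain m where m: "hom C m (Cod C e) Q" "m \<cdot> e = f" using coeq_desc[OF co fh fk] by blast
  have re: "regular_epi C e" unfolding regular_epi_def using co by blast
  have eh: "hom C e P (Cod C e)" using P(3) de by simp
  have "mono m"
    unfolding mono_def
  proof (intro allI impI, elim conjE)
    fix W u v assume u: "hom C u W (Dom C m)" and v: "hom C v W (Dom C m)" and muv: "m \<cdot> u = m \<cdot> v"
    have dm: "Dom C m = Cod C e" using m homD by auto
    have u': "hom C u W (Cod C e)" and v': "hom C v W (Cod C e)" using u v dm by auto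
    obtain p1 e1 where pb1: "is_pullback C e u p1 e1" using pb_ex[OF eh u'] by blast
    note D1 = pbD[OF pb1]
    have re1: "regular_epi C e1" using repi_pb[OF re pb1] .
    have du: "Dom C u = W" using u' homD by blast
    have H2: "hom C e1 (Dom C p1) W" using D1(2) du by simp
    have ve1: "hom C (v \<cdot> e1) (Dom C p1) (Cod C e)" using comp_hom[OF H2 v'] .
    obtain a2 e2 where pb2: "is_pullback C e (v \<cdot> e1) a2 e2" using pb_ex[OF eh ve1] by blast
    note D2 = pbD[OF pb2]
    have re2: "regular_epi C e2" using repi_pb[OF re pb2] .
    have dve: "Dom C (v \<cdot> e1) = Dom C p1" using ve1 homD by blast
    have H1: "hom C p1 (Dom C p1) P" using D1(1) de by simp
    have H3: "hom C a2 (Dom C a2) P" using D2(1) de by simp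
    have H4: "hom C e2 (Dom C a2) (Dom C p1)" using D2(2) dve by simp
    note H5 = m(1) and H6 = eh and H7 = u' and H8 = v'
    have E1: "e \<cdot> p1 = u \<cdot> e1" using D1(3) .
    have E2: "e \<cdot> a2 = (v \<cdot> e1) \<cdot> e2" using D2(3) .
    have pe: "hom C (p1 \<cdot> e2) (Dom C a2) P" using comp_hom[OF H4 H1] .
    have ee: "hom C (e1 \<cdot> e2) (Dom C a2) W" using comp_hom[OF H4 H2] .
    have v12: "v \<cdot> (e1 \<cdot> e2) = e \<cdot> a2" using E2 assoc[OF H4 H2 H8] by simp
    have u12: "u \<cdot> (e1 \<cdot> e2) = e \<cdot> (p1 \<cdot> e2)" using eq_ext[OF E1 H4 H1 H6 H2 H7] by simp
    have "f \<cdot> (p1 \<cdot> e2) = m \<cdot> (e \<cdot> (p1 \<cdot> e2))" using assoc[OF pe H6 H5] m(2) by simp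
    also have "\<dots> = m \<cdot> (u \<cdot> (e1 \<cdot> e2))" using u12 by simp
    also have "\<dots> = m \<cdot> (v \<cdot> (e1 \<cdot> e2))" using eq_ext[OF muv ee H7 H5 H8 H5] .
    also have "\<dots> = m \<cdot> (e \<cdot> a2)" using v12 by simp
    also have "\<dots> = f \<cdot> a2" using assoc[OF H3 H6 H5] m(2) by simp
    finally have fa: "f \<cdot> (p1 \<cdot> e2) = f \<cdot> a2" .
    have pe': "hom C (p1 \<cdot> e2) (Dom C a2) (Dom C f)" using pe dk by simp
    have H3': "hom C a2 (Dom C a2) (Dom C f)" using H3 dk by simp
    obtain h where h: "hom C h (Dom C a2) (Dom C k1)" "k1 \<cdot> h = p1 \<cdot> e2" "k2 \<cdot> h = a2"
      using pb_lift[OF kp pe' H3' fa] by blast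
    have "u \<cdot> (e1 \<cdot> e2) = e \<cdot> (k1 \<cdot> h)" using u12 h(2) by simp
    also have "\<dots> = e \<cdot> (k2 \<cdot> h)" using eq_ext[OF P(4) h(1) P(1) P(3) P(2) P(3)] .
    also have "\<dots> = v \<cdot> (e1 \<cdot> e2)" using h(3) v12 by simp
    finally have "u \<cdot> (e1 \<cdot> e2) = v \<cdot> (e1 \<cdot> e2)" .
    then have "(u \<cdot> e1) \<cdot> e2 = (v \<cdot> e1) \<cdot> e2" using assoc[OF H4 H2 H8] assoc[OF H4 H2 H7] by simp
    moreover have "hom C (u \<cdot> e1) (Cod C e2) (Cod C e)" using comp_hom[OF H2 H7] H4 homD by auto
    moreover have "hom C (v \<cdot> e1) (Cod C e2) (Cod C e)" using comp_hom[OF H2 H8] H4 homD by auto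
    ultimately have "u \<cdot> e1 = v \<cdot> e1" using repi_epi[OF re2] by blast
    moreover have "hom C u (Cod C e1) (Cod C e)" "hom C v (Cod C e1) (Cod C e)" using H2 H7 H8 homD by auto
    ultimately show "u = v" using repi_epi[OF re1] by blast
  qed
  then show ?thesis using that[OF eh m(1) m(2) re] by blast
qed


definition mem2 where
  "mem2 W w R \<longleftrightarrow> (case w of (x, y) \<Rightarrow> case R of (r1, r2) \<Rightarrow>
     (\<exists>u. hom C u W (Dom C r1) \<and> r1 \<cdot> u = x \<and> r2 \<cdot> u = y))"

lemma mem2_iff: "mem2 W (x, y) (r1, r2) \<longleftrightarrow> (\<exists>u. hom C u W (Dom C r1) \<and> r1 \<cdot> u = x \<and> r2 \<cdot> u = y)"
  unfolding mem2_def by simp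

lemma mem3_iff: "mem3 C W (x, y, z) (r1, r2, r3) \<longleftrightarrow> (\<exists>u. hom C u W (Dom C r1) \<and> r1 \<cdot> u = x \<and> r2 \<cdot> u = y \<and> r3 \<cdot> u = z)"
  unfolding mem3_def by simp

lemma rel2_iff: "rel2 C (r1, r2) X Y \<longleftrightarrow> hom C r1 (Dom C r1) X \<and> hom C r2 (Dom C r1) Y \<and>
     (\<forall>W u v. hom C u W (Dom C r1) \<and> hom C v W (Dom C r1) \<and>
        r1 \<cdot> u = r1 \<cdot> v \<and> r2 \<cdot> u = r2 \<cdot> v \<longrightarrow> u = v)"
  unfolding rel2_def by simp

lemma rel3_iff: "rel3 C (r1, r2, r3) X Y Z \<longleftrightarrow> hom C r1 (Dom C r1) X \<and> hom C r2 (Dom C r1) Y \<and> hom C r3 (Dom C r1) Z \<and>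
     (\<forall>W u v. hom C u W (Dom C r1) \<and> hom C v W (Dom C r1) \<and>
        r1 \<cdot> u = r1 \<cdot> v \<and> r2 \<cdot> u = r2 \<cdot> v \<and> r3 \<cdot> u = r3 \<cdot> v \<longrightarrow> u = v)"
  unfolding rel3_def by simp

lemma mem2_hom:
  assumes "rel2 C (r1, r2) X Y" "mem2 W (x, y) (r1, r2)"
  shows "hom C x W X" "hom C y W Y"
proof -
  obtain u where u: "hom C u W (Dom C r1)" "r1 \<cdot> u = x" "r2 \<cdot> u = y" using assms(2) unfolding mem2_iff by blast
  have r: "hom C r1 (Dom C r1) X" "hom C r2 (Dom C r1) Y" using assms(1) unfolding rel2_iff by auto
  show "hom C x W X" using comp_hom[OF u(1) r(1)] u(2) by simp
  show "hom C y W Y" using comp_hom[OF u(1) r(2)] u(3) by simp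
qed

lemma mem2_pre:
  assumes R: "rel2 C (r1, r2) X Y" and m: "mem2 W (x, y) (r1, r2)" and e: "hom C e W' W"
  shows "mem2 W' (x \<cdot> e, y \<cdot> e) (r1, r2)"
proof -
  obtain u where u: "hom C u W (Dom C r1)" "r1 \<cdot> u = x" "r2 \<cdot> u = y" using m unfolding mem2_iff by blast
  have r: "hom C r1 (Dom C r1) X" "hom C r2 (Dom C r1) Y" using R unfolding rel2_iff by auto
  have "hom C (u \<cdot> e) W' (Dom C r1)" using comp_hom[OF e u(1)] .
  moreover have "r1 \<cdot> (u \<cdot> e) = x \<cdot> e" using assoc[OF e u(1) r(1)] u(2) by simp
  moreover have "r2 \<cdot> (u \<cdot> e) = y \<cdot> e" using assoc[OF e u(1) r(2)] u(3) by simp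
  ultimately show ?thesis unfolding mem2_iff by blast
qed

lemma desc_core:
  assumes co: "is_coequalizer C f1 f2 e" and t: "hom C t (Dom C e) R0"
    and jm: "t \<cdot> f1 = t \<cdot> f2"
  obtains k where "hom C k (Cod C e) R0" "k \<cdot> e = t"
  using coeq_desc[OF co t jm] by blast

lemma leg_eq:
  assumes co: "is_coequalizer C f1 f2 e" and t: "hom C t (Dom C e) R0" and r: "hom C r R0 X"
    and x: "hom C x (Cod C e) X" and eq: "r \<cdot> t = x \<cdot> e"
  shows "r \<cdot> (t \<cdot> f1) = r \<cdot> (t \<cdot> f2)"
proof -
  note P = coeq_parts[OF co]
  have "r \<cdot> (t \<cdot> f1) = x \<cdot> (e \<cdot> f1)" using eq_ext[OF eq P(1) t r P(3) x] .
  also have "\<dots> = x \<cdot> (e \<cdot> f2)" using P(4) by simp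
  also have "\<dots> = r \<cdot> (t \<cdot> f2)" using eq_ext[OF eq P(2) t r P(3) x] by simp
  finally show ?thesis .
qed

lemma leg_desc:
  assumes e: "regular_epi C e" and k: "hom C k (Cod C e) R0" and r: "hom C r R0 X"
    and x: "hom C x (Cod C e) X" and ke: "k \<cdot> e = t" and eq: "r \<cdot> t = x \<cdot> e"
  shows "r \<cdot> k = x"
proof -
  have E: "hom C e (Dom C e) (Cod C e)" using repi_arr[OF e] .
  have "(r \<cdot> k) \<cdot> e = x \<cdot> e" using assoc[OF E k r] ke eq by simp
  then show ?thesis using repi_epi[OF e comp_hom[OF k r] x] by blast
qed

lemma descend2:
  assumes R: "rel2 C (r1, r2) X Y" and e: "regular_epi C e" and eh: "hom C e W' W"
    and x: "hom C x W X" and y: "hom C y W Y" and m: "mem2 W' (x \<cdot> e, y \<cdot> e) (r1, r2)"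
  shows "mem2 W (x, y) (r1, r2)"
proof -
  obtain f1 f2 where co: "is_coequalizer C f1 f2 e" using e unfolding regular_epi_def by blast
  note P = coeq_parts[OF co]
  have de: "Dom C e = W'" "Cod C e = W" using eh homD by auto
  obtain t where t: "hom C t W' (Dom C r1)" "r1 \<cdot> t = x \<cdot> e" "r2 \<cdot> t = y \<cdot> e" using m unfolding mem2_iff by blast
  have r: "hom C r1 (Dom C r1) X" "hom C r2 (Dom C r1) Y" and
    jm: "\<And>W u v. hom C u W (Dom C r1) \<Longrightarrow> hom C v W (Dom C r1) \<Longrightarrow>
        r1 \<cdot> u = r1 \<cdot> v \<Longrightarrow> r2 \<cdot> u = r2 \<cdot> v \<Longrightarrow> u = v" using R unfolding rel2_iff by blast+
  have t': "hom C t (Dom C e) (Dom C r1)" using t(1) de by simp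
  have x': "hom C x (Cod C e) X" and y': "hom C y (Cod C e) Y" using x y de by auto
  have "t \<cdot> f1 = t \<cdot> f2"
    by (rule jm[OF comp_hom[OF P(1) t'] comp_hom[OF P(2) t'] leg_eq[OF co t' r(1) x' t(2)] leg_eq[OF co t' r(2) y' t(3)]])
  then obtain k where k: "hom C k (Cod C e) (Dom C r1)" "k \<cdot> e = t" using desc_core[OF co t'] by blast
  have "r1 \<cdot> k = x" using leg_desc[OF e k(1) r(1) x' k(2) t(2)] .
  moreover have "r2 \<cdot> k = y" using leg_desc[OF e k(1) r(2) y' k(2) t(3)] .
  ultimately show ?thesis unfolding mem2_iff using k(1) de by auto
qed

lemma descend3:
  assumes R: "rel3 C (r1, r2, r3) X Y Z" and e: "regular_epi C e" and eh: "hom C e W' W"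
    and x: "hom C x W X" and y: "hom C y W Y" and z: "hom C z W Z"
    and m: "mem3 C W' (x \<cdot> e, y \<cdot> e, z \<cdot> e) (r1, r2, r3)"
  shows "mem3 C W (x, y, z) (r1, r2, r3)"
proof -
  obtain f1 f2 where co: "is_coequalizer C f1 f2 e" using e unfolding regular_epi_def by blast
  note P = coeq_parts[OF co]
  have de: "Dom C e = W'" "Cod C e = W" using eh homD by auto
  obtain t where t: "hom C t W' (Dom C r1)" "r1 \<cdot> t = x \<cdot> e" "r2 \<cdot> t = y \<cdot> e" "r3 \<cdot> t = z \<cdot> e"
    using m unfolding mem3_iff by blast
  have r: "hom C r1 (Dom C r1) X" "hom C r2 (Dom C r1) Y" "hom C r3 (Dom C r1) Z" and
    jm: "\<And>W u v. hom C u W (Dom C r1) \<Longrightarrow> hom C v W (Dom C r1) \<Longrightarrow>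
        r1 \<cdot> u = r1 \<cdot> v \<Longrightarrow> r2 \<cdot> u = r2 \<cdot> v \<Longrightarrow> r3 \<cdot> u = r3 \<cdot> v \<Longrightarrow> u = v"
    using R unfolding rel3_iff by blast+
  have t': "hom C t (Dom C e) (Dom C r1)" using t(1) de by simp
  have x': "hom C x (Cod C e) X" and y': "hom C y (Cod C e) Y" and z': "hom C z (Cod C e) Z" using x y z de by auto
  have "t \<cdot> f1 = t \<cdot> f2"
    by (rule jm[OF comp_hom[OF P(1) t'] comp_hom[OF P(2) t'] leg_eq[OF co t' r(1) x' t(2)]
          leg_eq[OF co t' r(2) y' t(3)] leg_eq[OF co t' r(3) z' t(4)]])
  then obtain k where k: "hom C k (Cod C e) (Dom C r1)" "k \<cdot> e = t" using desc_core[OF co t'] by blast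
  have "r1 \<cdot> k = x" using leg_desc[OF e k(1) r(1) x' k(2) t(2)] .
  moreover have "r2 \<cdot> k = y" using leg_desc[OF e k(1) r(2) y' k(2) t(3)] .
  moreover have "r3 \<cdot> k = z" using leg_desc[OF e k(1) r(3) z' k(2) t(4)] .
  ultimately show ?thesis unfolding mem3_iff using k(1) de by auto
qed


lemma img2:
  assumes f: "hom C f P X" and g: "hom C g P Y"
  obtains r1 r2 where "rel2 C (r1, r2) X Y"
    "\<And>W t. hom C t W P \<Longrightarrow> mem2 W (f \<cdot> t, g \<cdot> t) (r1, r2)"
    "\<And>W x y. mem2 W (x, y) (r1, r2) \<Longrightarrow>
       \<exists>W' e t. hom C e W' W \<and> regular_epi C e \<and> hom C t W' P \<and> f \<cdot> t = x \<cdot> e \<and> g \<cdot> t = y \<cdot> e"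
proof -
  have X: "X \<in> Obj C" and Y: "Y \<in> Obj C" using f g hom_obj by auto
  obtain Pr p1 p2 where p1: "hom C p1 Pr X" and p2: "hom C p2 Pr Y"
    and pair: "\<And>W u v. hom C u W X \<Longrightarrow> hom C v W Y \<Longrightarrow> \<exists>h. hom C h W Pr \<and> p1 \<cdot> h = u \<and> p2 \<cdot> h = v"
    and uniq: "\<And>W h h'. hom C h W Pr \<Longrightarrow> hom C h' W Pr \<Longrightarrow> p1 \<cdot> h = p1 \<cdot> h' \<Longrightarrow> p2 \<cdot> h = p2 \<cdot> h' \<Longrightarrow> h = h'"
    by (rule prod_ex[OF X Y]) (rule that; assumption)
  obtain h0 where h0: "hom C h0 P Pr" "p1 \<cdot> h0 = f" "p2 \<cdot> h0 = g" using pair[OF f g] by blast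
  obtain I e m where e: "hom C e P I" and m: "hom C m I Pr" and me: "m \<cdot> e = h0"
    and re: "regular_epi C e" and mm: "mono m"
    by (rule image[OF h0(1)])
  have dm: "Dom C m = I" using m homD by blast
  have r1: "hom C (p1 \<cdot> m) I X" using comp_hom[OF m p1] .
  have r2: "hom C (p2 \<cdot> m) I Y" using comp_hom[OF m p2] .
  have d1: "Dom C (p1 \<cdot> m) = I" using r1 homD by blast
  have "rel2 C (p1 \<cdot> m, p2 \<cdot> m) X Y"
    unfolding rel2_iff d1
  proof (intro conjI r1 r2 allI impI, elim conjE)
    fix W u v assume u: "hom C u W I" and v: "hom C v W I" and e1: "(p1 \<cdot> m) \<cdot> u = (p1 \<cdot> m) \<cdot> v"
      and e2: "(p2 \<cdot> m) \<cdot> u = (p2 \<cdot> m) \<cdot> v"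
    have "m \<cdot> u = m \<cdot> v"
      using uniq[OF comp_hom[OF u m] comp_hom[OF v m]] e1 e2 assoc[OF u m p1] assoc[OF v m p1]
        assoc[OF u m p2] assoc[OF v m p2] by simp
    then show "u = v" using monoD[OF mm] u v dm by simp
  qed
  moreover have "mem2 W (f \<cdot> t, g \<cdot> t) (p1 \<cdot> m, p2 \<cdot> m)" if t: "hom C t W P" for W t
  proof -
    have et: "hom C (e \<cdot> t) W I" using comp_hom[OF t e] .
    have "(p1 \<cdot> m) \<cdot> (e \<cdot> t) = f \<cdot> t"
      using t e m p1 p2 unfolding hom_def by (simp add: me[symmetric] h0(2)[symmetric])
    moreover have "(p2 \<cdot> m) \<cdot> (e \<cdot> t) = g \<cdot> t"
      using t e m p1 p2 unfolding hom_def by (simp add: me[symmetric] h0(3)[symmetric])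
    ultimately show ?thesis unfolding mem2_iff d1 using et by blast
  qed
  moreover have "\<exists>W' e' t. hom C e' W' W \<and> regular_epi C e' \<and> hom C t W' P \<and> f \<cdot> t = x \<cdot> e' \<and> g \<cdot> t = y \<cdot> e'"
    if xy: "mem2 W (x, y) (p1 \<cdot> m, p2 \<cdot> m)" for W x y
  proof -
    obtain u where u: "hom C u W I" "(p1 \<cdot> m) \<cdot> u = x" "(p2 \<cdot> m) \<cdot> u = y" using xy unfolding mem2_iff d1 by blast
    obtain q e' where pb: "is_pullback C e u q e'" using pb_ex[OF e u(1)] by blast
    note D = pbD[OF pb]
    have de: "Dom C e = P" "Dom C u = W" using e u homD by auto
    have q: "hom C q (Dom C q) P" using D(1) de(1) by simp
    have e': "hom C e' (Dom C q) W" using D(2) de(2) by simp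
    have re': "regular_epi C e'" using repi_pb[OF re pb] .
    have E: "e \<cdot> q = u \<cdot> e'" using D(3) .
    have "f \<cdot> q = x \<cdot> e'"
      using q e' e m p1 p2 u(1) unfolding hom_def by (simp add: h0(2)[symmetric] me[symmetric] u(2)[symmetric] E)
    moreover have "g \<cdot> q = y \<cdot> e'"
      using q e' e m p1 p2 u(1) unfolding hom_def by (simp add: h0(3)[symmetric] me[symmetric] u(3)[symmetric] E)
    ultimately show ?thesis using q e' re' by blast
  qed
  ultimately show ?thesis by (rule that)
qed


lemma img3:
  assumes f: "hom C f P X" and g: "hom C g P Y" and h: "hom C h P Z"
  obtains r1 r2 r3 where "rel3 C (r1, r2, r3) X Y Z"
    "\<And>W t. hom C t W P \<Longrightarrow> mem3 C W (f \<cdot> t, g \<cdot> t, h \<cdot> t) (r1, r2, r3)"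
    "\<And>W x y z. mem3 C W (x, y, z) (r1, r2, r3) \<Longrightarrow>
       \<exists>W' e t. hom C e W' W \<and> regular_epi C e \<and> hom C t W' P \<and> f \<cdot> t = x \<cdot> e \<and> g \<cdot> t = y \<cdot> e
          \<and> h \<cdot> t = z \<cdot> e"
proof -
  have Y: "Y \<in> Obj C" and Z: "Z \<in> Obj C" using g h hom_obj by auto
  obtain Q q1 q2 where q1: "hom C q1 Q Y" and q2: "hom C q2 Q Z"
    and pair: "\<And>W u v. hom C u W Y \<Longrightarrow> hom C v W Z \<Longrightarrow> \<exists>h. hom C h W Q \<and> q1 \<cdot> h = u \<and> q2 \<cdot> h = v"
    and uniq: "\<And>W h h'. hom C h W Q \<Longrightarrow> hom C h' W Q \<Longrightarrow> q1 \<cdot> h = q1 \<cdot> h' \<Longrightarrow> q2 \<cdot> h = q2 \<cdot> h' \<Longrightarrow> h = h'"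
    by (rule prod_ex[OF Y Z]) (rule that; assumption)
  obtain k where k: "hom C k P Q" "q1 \<cdot> k = g" "q2 \<cdot> k = h" using pair[OF g h] by blast
  obtain s1 s2 where S: "rel2 C (s1, s2) X Q"
    and Smem: "\<And>W t. hom C t W P \<Longrightarrow> mem2 W (f \<cdot> t, k \<cdot> t) (s1, s2)"
    and Scov: "\<And>W x y. mem2 W (x, y) (s1, s2) \<Longrightarrow>
       \<exists>W' e t. hom C e W' W \<and> regular_epi C e \<and> hom C t W' P \<and> f \<cdot> t = x \<cdot> e \<and> k \<cdot> t = y \<cdot> e"
    by (rule img2[OF f k(1)]) (rule that; assumption)
  have s: "hom C s1 (Dom C s1) X" "hom C s2 (Dom C s1) Q" and
    jm: "\<And>W u v. hom C u W (Dom C s1) \<Longrightarrow> hom C v W (Dom C s1) \<Longrightarrow>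
        s1 \<cdot> u = s1 \<cdot> v \<Longrightarrow> s2 \<cdot> u = s2 \<cdot> v \<Longrightarrow> u = v" using S unfolding rel2_iff by blast+
  have R: "rel3 C (s1, q1 \<cdot> s2, q2 \<cdot> s2) X Y Z"
    unfolding rel3_iff
  proof (intro conjI s(1) comp_hom[OF s(2) q1] comp_hom[OF s(2) q2] allI impI, elim conjE)
    fix W u v assume u: "hom C u W (Dom C s1)" and v: "hom C v W (Dom C s1)" and e1: "s1 \<cdot> u = s1 \<cdot> v"
      and e2: "(q1 \<cdot> s2) \<cdot> u = (q1 \<cdot> s2) \<cdot> v" and e3: "(q2 \<cdot> s2) \<cdot> u = (q2 \<cdot> s2) \<cdot> v"
    have "s2 \<cdot> u = s2 \<cdot> v"
      using uniq[OF comp_hom[OF u s(2)] comp_hom[OF v s(2)]] e2 e3 assoc[OF u s(2) q1] assoc[OF v s(2) q1]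
        assoc[OF u s(2) q2] assoc[OF v s(2) q2] by simp
    then show "u = v" using jm[OF u v e1] by simp
  qed
  moreover have "mem3 C W (f \<cdot> t, g \<cdot> t, h \<cdot> t) (s1, q1 \<cdot> s2, q2 \<cdot> s2)" if t: "hom C t W P" for W t
  proof -
    obtain u where u: "hom C u W (Dom C s1)" "s1 \<cdot> u = f \<cdot> t" "s2 \<cdot> u = k \<cdot> t"
      using Smem[OF t] unfolding mem2_iff by blast
    have "(q1 \<cdot> s2) \<cdot> u = g \<cdot> t"
      using t u(1) s q1 q2 k(1) unfolding hom_def by (simp add: k(2)[symmetric] u(3))
    moreover have "(q2 \<cdot> s2) \<cdot> u = h \<cdot> t"
      using t u(1) s q1 q2 k(1) unfolding hom_def by (simp add: k(3)[symmetric] u(3))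
    ultimately show ?thesis unfolding mem3_iff using u(1,2) by blast
  qed
  moreover have "\<exists>W' e t. hom C e W' W \<and> regular_epi C e \<and> hom C t W' P \<and> f \<cdot> t = x \<cdot> e \<and> g \<cdot> t = y \<cdot> e
          \<and> h \<cdot> t = z \<cdot> e"
    if xyz: "mem3 C W (x, y, z) (s1, q1 \<cdot> s2, q2 \<cdot> s2)" for W x y z
  proof -
    obtain u where u: "hom C u W (Dom C s1)" "s1 \<cdot> u = x" "(q1 \<cdot> s2) \<cdot> u = y" "(q2 \<cdot> s2) \<cdot> u = z"
      using xyz unfolding mem3_iff by blast
    have "mem2 W (x, s2 \<cdot> u) (s1, s2)" unfolding mem2_iff using u(1,2) by blast
    then obtain W' e t where e: "hom C e W' W" "regular_epi C e" "hom C t W' P" "f \<cdot> t = x \<cdot> e"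
      "k \<cdot> t = (s2 \<cdot> u) \<cdot> e" using Scov by blast
    have "g \<cdot> t = y \<cdot> e"
      using e(1,3) u(1) s q1 q2 k(1) unfolding hom_def by (simp add: k(2)[symmetric] u(3)[symmetric] e(5))
    moreover have "h \<cdot> t = z \<cdot> e"
      using e(1,3) u(1) s q1 q2 k(1) unfolding hom_def by (simp add: k(3)[symmetric] u(4)[symmetric] e(5))
    ultimately show ?thesis using e by blast
  qed
  ultimately show ?thesis by (rule that)
qed

lemma kernel_rel:
  assumes f: "hom C f P Q"
  obtains k1 k2 where "rel2 C (k1, k2) P P"
    "\<And>W a b. mem2 W (a, b) (k1, k2) \<longleftrightarrow> hom C a W P \<and> hom C b W P \<and> f \<cdot> a = f \<cdot> b"
proof -
  obtain k1 k2 where kp: "is_pullback C f f k1 k2" using pb_ex f f by blast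
  note D = pbD[OF kp]
  have df: "Dom C f = P" using f homD by blast
  have k: "hom C k1 (Dom C k1) P" "hom C k2 (Dom C k1) P" using D(1,2) df by simp_all
  have "rel2 C (k1, k2) P P" unfolding rel2_iff
  proof (intro conjI k allI impI, elim conjE)
    fix W u v assume "hom C u W (Dom C k1)" "hom C v W (Dom C k1)" "k1 \<cdot> u = k1 \<cdot> v" "k2 \<cdot> u = k2 \<cdot> v"
    then show "u = v" using pb_uniq[OF kp] by blast
  qed
  moreover have "mem2 W (a, b) (k1, k2) \<longleftrightarrow> hom C a W P \<and> hom C b W P \<and> f \<cdot> a = f \<cdot> b" for W a b
  proof
    assume "mem2 W (a, b) (k1, k2)"
    then obtain u where u: "hom C u W (Dom C k1)" "k1 \<cdot> u = a" "k2 \<cdot> u = b" unfolding mem2_iff by blast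
    have "f \<cdot> a = f \<cdot> b" using eq_ext[OF D(3) u(1) k(1) f k(2) f] u(2,3) by simp
    then show "hom C a W P \<and> hom C b W P \<and> f \<cdot> a = f \<cdot> b"
      using comp_hom[OF u(1) k(1)] comp_hom[OF u(1) k(2)] u(2,3) by simp
  next
    assume H: "hom C a W P \<and> hom C b W P \<and> f \<cdot> a = f \<cdot> b"
    then obtain h where "hom C h W (Dom C k1)" "k1 \<cdot> h = a" "k2 \<cdot> h = b"
      using pb_lift[OF kp, of a W b] df by blast
    then show "mem2 W (a, b) (k1, k2)" unfolding mem2_iff by blast
  qed
  ultimately show ?thesis by (rule that)
qed

lemma rel_le_iff: "rel_le C (r1, r2) S \<longleftrightarrow> mem2 (Dom C r1) (r1, r2) S"
  unfolding rel_le_def mem2_def by (cases S) simp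

lemma le_mem:
  assumes le: "rel_le C (r1, r2) (s1, s2)" and R: "rel2 C (r1, r2) X Y" and S: "rel2 C (s1, s2) X Y"
    and m: "mem2 W (x, y) (r1, r2)"
  shows "mem2 W (x, y) (s1, s2)"
proof -
  obtain u where u: "hom C u (Dom C r1) (Dom C s1)" "s1 \<cdot> u = r1" "s2 \<cdot> u = r2"
    using le unfolding rel_le_def by auto
  obtain v where v: "hom C v W (Dom C r1)" "r1 \<cdot> v = x" "r2 \<cdot> v = y" using m unfolding mem2_iff by blast
  have s: "hom C s1 (Dom C s1) X" "hom C s2 (Dom C s1) Y" using S unfolding rel2_iff by auto
  have "s1 \<cdot> (u \<cdot> v) = x" using assoc[OF v(1) u(1) s(1)] u(2) v(2) by simp
  moreover have "s2 \<cdot> (u \<cdot> v) = y" using assoc[OF v(1) u(1) s(2)] u(3) v(3) by simp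
  ultimately show ?thesis unfolding mem2_iff using comp_hom[OF v(1) u(1)] by blast
qed

lemma mem_generic:
  assumes R: "rel2 C (r1, r2) X Y"
  shows "mem2 (Dom C r1) (r1, r2) (r1, r2)"
proof -
  have r: "hom C r1 (Dom C r1) X" "hom C r2 (Dom C r1) Y" using R unfolding rel2_iff by auto
  have D: "Dom C r1 \<in> Obj C" using r hom_obj by blast
  show ?thesis unfolding mem2_iff using id_hom[OF D] id_r[OF r(1)] id_r[OF r(2)] by blast
qed

lemma mem_le:
  assumes R: "rel2 C (r1, r2) X Y" and H: "\<And>W x y. mem2 W (x, y) (r1, r2) \<Longrightarrow> mem2 W (x, y) S"
  shows "rel_le C (r1, r2) S"
  unfolding rel_le_iff using H[OF mem_generic[OF R]] .

lemma eq_refl: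
  assumes E: "equiv_rel C X (r1, r2)" and x: "hom C x W X"
  shows "mem2 W (x, x) (r1, r2)"
proof -
  obtain d where d: "hom C d X (Dom C r1)" "r1 \<cdot> d = Idm C X" "r2 \<cdot> d = Idm C X"
    using E unfolding equiv_rel_def reflexive_rel_def by auto
  have r: "hom C r1 (Dom C r1) X" "hom C r2 (Dom C r1) X" using E unfolding equiv_rel_def rel2_iff by auto
  have "r1 \<cdot> (d \<cdot> x) = x" using assoc[OF x d(1) r(1)] d(2) id_l[OF x] by simp
  moreover have "r2 \<cdot> (d \<cdot> x) = x" using assoc[OF x d(1) r(2)] d(3) id_l[OF x] by simp
  ultimately show ?thesis unfolding mem2_iff using comp_hom[OF x d(1)] by blast
qed

lemma eq_sym:
  assumes E: "equiv_rel C X (r1, r2)" and m: "mem2 W (x, y) (r1, r2)"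
  shows "mem2 W (y, x) (r1, r2)"
proof -
  have r: "hom C r1 (Dom C r1) X" "hom C r2 (Dom C r1) X" using E unfolding equiv_rel_def rel2_iff by auto
  have dr: "Dom C r2 = Dom C r1" using r(2) homD by blast
  obtain s where s: "hom C s (Dom C r1) (Dom C r1)" "r1 \<cdot> s = r2" "r2 \<cdot> s = r1"
    using E dr unfolding equiv_rel_def symmetric_rel_def rel_le_def by auto
  obtain u where u: "hom C u W (Dom C r1)" "r1 \<cdot> u = x" "r2 \<cdot> u = y" using m unfolding mem2_iff by blast
  have "r1 \<cdot> (s \<cdot> u) = y" using assoc[OF u(1) s(1) r(1)] s(2) u(3) by simp
  moreover have "r2 \<cdot> (s \<cdot> u) = x" using assoc[OF u(1) s(1) r(2)] s(3) u(2) by simp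
  ultimately show ?thesis unfolding mem2_iff using comp_hom[OF u(1) s(1)] by blast
qed

lemma eq_trans:
  assumes E: "equiv_rel C X (r1, r2)" and m1: "mem2 W (x, y) (r1, r2)" and m2: "mem2 W (y, z) (r1, r2)"
  shows "mem2 W (x, z) (r1, r2)"
proof -
  have r: "hom C r1 (Dom C r1) X" "hom C r2 (Dom C r1) X" using E unfolding equiv_rel_def rel2_iff by auto
  have tr: "transitive_rel C (r1, r2)" using E unfolding equiv_rel_def by auto
  obtain p1 p2 where pb: "is_pullback C r2 r1 p1 p2" using pb_ex[OF r(2) r(1)] by blast
  note D = pbD[OF pb]
  have dr: "Dom C r2 = Dom C r1" using r(2) homD by blast
  obtain t where t: "hom C t (Dom C p1) (Dom C r1)" "r1 \<cdot> t = r1 \<cdot> p1" "r2 \<cdot> t = r2 \<cdot> p2"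
    using tr pb unfolding transitive_rel_def by auto
  obtain u where u: "hom C u W (Dom C r1)" "r1 \<cdot> u = x" "r2 \<cdot> u = y" using m1 unfolding mem2_iff by blast
  obtain v where v: "hom C v W (Dom C r1)" "r1 \<cdot> v = y" "r2 \<cdot> v = z" using m2 unfolding mem2_iff by blast
  have u': "hom C u W (Dom C r2)" using u(1) dr by simp
  obtain h where h: "hom C h W (Dom C p1)" "p1 \<cdot> h = u" "p2 \<cdot> h = v"
    using pb_lift[OF pb u' v(1)] u(3) v(2) by auto
  have p: "hom C p1 (Dom C p1) (Dom C r1)" "hom C p2 (Dom C p1) (Dom C r1)" using D(1,2) dr by simp_all
  have "r1 \<cdot> (t \<cdot> h) = x" using eq_ext[OF t(2) h(1) t(1) r(1) p(1) r(1)] h(2) u(2) by simp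
  moreover have "r2 \<cdot> (t \<cdot> h) = z" using eq_ext[OF t(3) h(1) t(1) r(2) p(2) r(2)] h(3) v(3) by simp
  ultimately show ?thesis unfolding mem2_iff using comp_hom[OF h(1) t(1)] by blast
qed


lemma rel2_homs:
  assumes "rel2 C (r1, r2) X Y"
  shows "hom C r1 (Dom C r1) X" "hom C r2 (Dom C r1) Y"
  using assms unfolding rel2_iff by auto

lemma intersection:
  assumes A: "rel2 C (a1, a2) X X" and B: "rel2 C (b1, b2) X X"
  obtains n1 n2 where "rel2 C (n1, n2) X X"
    "\<And>W x y. mem2 W (x, y) (n1, n2) \<longleftrightarrow> mem2 W (x, y) (a1, a2) \<and> mem2 W (x, y) (b1, b2)"
proof -
  note a = rel2_homs[OF A] and b = rel2_homs[OF B]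
  have X: "X \<in> Obj C" using a hom_obj by blast
  obtain Pr p1 p2 where p1: "hom C p1 Pr X" and p2: "hom C p2 Pr X"
    and pair: "\<And>W u v. hom C u W X \<Longrightarrow> hom C v W X \<Longrightarrow> \<exists>h. hom C h W Pr \<and> p1 \<cdot> h = u \<and> p2 \<cdot> h = v"
    and uniq: "\<And>W h h'. hom C h W Pr \<Longrightarrow> hom C h' W Pr \<Longrightarrow> p1 \<cdot> h = p1 \<cdot> h' \<Longrightarrow> p2 \<cdot> h = p2 \<cdot> h' \<Longrightarrow> h = h'"
    by (rule prod_ex[OF X X]) (rule that; assumption)
  obtain hA where hA: "hom C hA (Dom C a1) Pr" "p1 \<cdot> hA = a1" "p2 \<cdot> hA = a2" using pair[OF a] by blast
  obtain hB where hB: "hom C hB (Dom C b1) Pr" "p1 \<cdot> hB = b1" "p2 \<cdot> hB = b2" using pair[OF b] by blast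
  obtain pa pb where pb: "is_pullback C hA hB pa pb" using pb_ex[OF hA(1) hB(1)] by blast
  note D = pbD[OF pb]
  have dA: "Dom C hA = Dom C a1" "Dom C hB = Dom C b1" using hA(1) hB(1) homD by auto
  have pa: "hom C pa (Dom C pa) (Dom C a1)" and pbh: "hom C pb (Dom C pa) (Dom C b1)" using D(1,2) dA by simp_all
  obtain n1 n2 where N: "rel2 C (n1, n2) X X"
    and Nmem: "\<And>W t. hom C t W (Dom C pa) \<Longrightarrow> mem2 W ((a1 \<cdot> pa) \<cdot> t, (a2 \<cdot> pa) \<cdot> t) (n1, n2)"
    and Ncov: "\<And>W x y. mem2 W (x, y) (n1, n2) \<Longrightarrow>
       \<exists>W' e t. hom C e W' W \<and> regular_epi C e \<and> hom C t W' (Dom C pa) \<and> (a1 \<cdot> pa) \<cdot> t = x \<cdot> e \<and> (a2 \<cdot> pa) \<cdot> t = y \<cdot> e"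
    by (rule img2[OF comp_hom[OF pa a(1)] comp_hom[OF pa a(2)]]) (rule that; assumption)
  have "mem2 W (x, y) (n1, n2) \<longleftrightarrow> mem2 W (x, y) (a1, a2) \<and> mem2 W (x, y) (b1, b2)" for W x y
  proof
    assume m: "mem2 W (x, y) (n1, n2)"
    have x: "hom C x W X" and y: "hom C y W X" using mem2_hom[OF N m] by auto
    obtain W' e t where e: "hom C e W' W" "regular_epi C e" "hom C t W' (Dom C pa)" "(a1 \<cdot> pa) \<cdot> t = x \<cdot> e"
      "(a2 \<cdot> pa) \<cdot> t = y \<cdot> e" using Ncov[OF m] by blast
    have "mem2 W' (x \<cdot> e, y \<cdot> e) (a1, a2)" unfolding mem2_iff
      using comp_hom[OF e(3) pa] e(4,5) assoc[OF e(3) pa a(1)] assoc[OF e(3) pa a(2)] by auto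
    then have mA: "mem2 W (x, y) (a1, a2)" using descend2[OF A e(2) e(1) x y] by blast
    have pbh': "hom C pb (Dom C pa) (Dom C hB)" and pa': "hom C pa (Dom C pa) (Dom C hA)" using D(2,1) .
    have HH: "hB \<cdot> (pb \<cdot> t) = hA \<cdot> (pa \<cdot> t)" using eq_ext[OF D(3)[symmetric] e(3) pbh hB(1) pa hA(1)] .
    have pt: "hom C (pa \<cdot> t) W' (Dom C a1)" using comp_hom[OF e(3) pa] .
    have qt: "hom C (pb \<cdot> t) W' (Dom C b1)" using comp_hom[OF e(3) pbh] .
    have "b1 \<cdot> (pb \<cdot> t) = p1 \<cdot> (hB \<cdot> (pb \<cdot> t))" using assoc[OF qt hB(1) p1] hB(2) by simp
    also have "\<dots> = p1 \<cdot> (hA \<cdot> (pa \<cdot> t))" using HH by simp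
    also have "\<dots> = a1 \<cdot> (pa \<cdot> t)" using assoc[OF pt hA(1) p1] hA(2) by simp
    also have "\<dots> = x \<cdot> e" using assoc[OF e(3) pa a(1)] e(4) by simp
    finally have "b1 \<cdot> (pb \<cdot> t) = x \<cdot> e" .
    moreover have "b2 \<cdot> (pb \<cdot> t) = p2 \<cdot> (hB \<cdot> (pb \<cdot> t))" using assoc[OF qt hB(1) p2] hB(3) by simp
    moreover have "p2 \<cdot> (hA \<cdot> (pa \<cdot> t)) = a2 \<cdot> (pa \<cdot> t)" using assoc[OF pt hA(1) p2] hA(3) by simp
    moreover have "a2 \<cdot> (pa \<cdot> t) = y \<cdot> e" using assoc[OF e(3) pa a(2)] e(5) by simp
    ultimately have "b1 \<cdot> (pb \<cdot> t) = x \<cdot> e" "b2 \<cdot> (pb \<cdot> t) = y \<cdot> e" using HH by simp_all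
    then have "mem2 W' (x \<cdot> e, y \<cdot> e) (b1, b2)" unfolding mem2_iff
      using comp_hom[OF e(3) pbh] by blast
    then have mB: "mem2 W (x, y) (b1, b2)" using descend2[OF B e(2) e(1) x y] by blast
    show "mem2 W (x, y) (a1, a2) \<and> mem2 W (x, y) (b1, b2)" using mA mB by blast
  next
    assume "mem2 W (x, y) (a1, a2) \<and> mem2 W (x, y) (b1, b2)"
    then obtain u v where u: "hom C u W (Dom C a1)" "a1 \<cdot> u = x" "a2 \<cdot> u = y"
      and v: "hom C v W (Dom C b1)" "b1 \<cdot> v = x" "b2 \<cdot> v = y" unfolding mem2_iff by blast
    have "hA \<cdot> u = hB \<cdot> v"
      using uniq[OF comp_hom[OF u(1) hA(1)] comp_hom[OF v(1) hB(1)]]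
        assoc[OF u(1) hA(1) p1] assoc[OF u(1) hA(1) p2] assoc[OF v(1) hB(1) p1] assoc[OF v(1) hB(1) p2]
        hA(2,3) hB(2,3) u(2,3) v(2,3) by simp
    then obtain h where h: "hom C h W (Dom C pa)" "pa \<cdot> h = u" "pb \<cdot> h = v"
      using pb_lift[OF pb, of u W v] u(1) v(1) dA by metis
    have "(a1 \<cdot> pa) \<cdot> h = x" using assoc[OF h(1) pa a(1)] h(2) u(2) by simp
    moreover have "(a2 \<cdot> pa) \<cdot> h = y" using assoc[OF h(1) pa a(2)] h(2) u(3) by simp
    ultimately show "mem2 W (x, y) (n1, n2)" using Nmem[OF h(1)] by simp
  qed
  with N show ?thesis by (rule that)
qed

lemma composite:
  assumes B: "rel2 C (b1, b2) X X" and D: "rel2 C (d1, d2) X X"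
  obtains k1 k2 where "rel2 C (k1, k2) X X"
    "\<And>W x y z. mem2 W (x, y) (b1, b2) \<Longrightarrow> mem2 W (y, z) (d1, d2) \<Longrightarrow> mem2 W (x, z) (k1, k2)"
    "\<And>W x z. mem2 W (x, z) (k1, k2) \<Longrightarrow> \<exists>W' e y. hom C e W' W \<and> regular_epi C e \<and>
        mem2 W' (x \<cdot> e, y) (b1, b2) \<and> mem2 W' (y, z \<cdot> e) (d1, d2)"
proof -
  note b = rel2_homs[OF B] and d = rel2_homs[OF D]
  obtain p q where pb: "is_pullback C b2 d1 p q" using pb_ex[OF b(2) d(1)] by blast
  note P = pbD[OF pb]
  have db: "Dom C b2 = Dom C b1" "Dom C d1 = Dom C d1" using b(2) homD by auto
  have p: "hom C p (Dom C p) (Dom C b1)" and q: "hom C q (Dom C p) (Dom C d1)" using P(1,2) db by simp_all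
  obtain k1 k2 where K: "rel2 C (k1, k2) X X"
    and Kmem: "\<And>W t. hom C t W (Dom C p) \<Longrightarrow> mem2 W ((b1 \<cdot> p) \<cdot> t, (d2 \<cdot> q) \<cdot> t) (k1, k2)"
    and Kcov: "\<And>W x y. mem2 W (x, y) (k1, k2) \<Longrightarrow>
       \<exists>W' e t. hom C e W' W \<and> regular_epi C e \<and> hom C t W' (Dom C p) \<and> (b1 \<cdot> p) \<cdot> t = x \<cdot> e \<and> (d2 \<cdot> q) \<cdot> t = y \<cdot> e"
    by (rule img2[OF comp_hom[OF p b(1)] comp_hom[OF q d(2)]]) (rule that; assumption)
  have intro: "mem2 W (x, z) (k1, k2)" if m1: "mem2 W (x, y) (b1, b2)" and m2: "mem2 W (y, z) (d1, d2)" for W x y z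
  proof -
    obtain u where u: "hom C u W (Dom C b1)" "b1 \<cdot> u = x" "b2 \<cdot> u = y" using m1 unfolding mem2_iff by blast
    obtain v where v: "hom C v W (Dom C d1)" "d1 \<cdot> v = y" "d2 \<cdot> v = z" using m2 unfolding mem2_iff by blast
    obtain h where h: "hom C h W (Dom C p)" "p \<cdot> h = u" "q \<cdot> h = v"
      using pb_lift[OF pb, of u W v] u v db by metis
    have "(b1 \<cdot> p) \<cdot> h = x" using assoc[OF h(1) p b(1)] h(2) u(2) by simp
    moreover have "(d2 \<cdot> q) \<cdot> h = z" using assoc[OF h(1) q d(2)] h(3) v(3) by simp
    ultimately show ?thesis using Kmem[OF h(1)] by simp
  qed
  have elim: "\<exists>W' e y. hom C e W' W \<and> regular_epi C e \<and>
        mem2 W' (x \<cdot> e, y) (b1, b2) \<and> mem2 W' (y, z \<cdot> e) (d1, d2)" if m: "mem2 W (x, z) (k1, k2)" for W x z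
  proof -
    obtain W' e t where e: "hom C e W' W" "regular_epi C e" "hom C t W' (Dom C p)" "(b1 \<cdot> p) \<cdot> t = x \<cdot> e"
      "(d2 \<cdot> q) \<cdot> t = z \<cdot> e" using Kcov[OF m] by blast
    have "mem2 W' (x \<cdot> e, b2 \<cdot> (p \<cdot> t)) (b1, b2)" unfolding mem2_iff
      using comp_hom[OF e(3) p] e(4) assoc[OF e(3) p b(1)] by auto
    moreover have "mem2 W' (b2 \<cdot> (p \<cdot> t), z \<cdot> e) (d1, d2)" unfolding mem2_iff
      using comp_hom[OF e(3) q] e(5) assoc[OF e(3) q d(2)] eq_ext[OF P(3) e(3) p b(2) q d(1)] by auto
    ultimately show ?thesis using e(1,2) by blast
  qed
  from K intro elim show ?thesis by (rule that)
qed

end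

locale rm = regcat +
  assumes mal: "is_maltsev C"
begin

lemma refl_equiv:
  assumes R: "rel2 C (r1, r2) X X" and m: "mem2 X (Idm C X, Idm C X) (r1, r2)"
  shows "equiv_rel C X (r1, r2)"
proof -
  have X: "X \<in> Obj C" using rel2_homs[OF R] hom_obj by blast
  have "reflexive_rel C X (r1, r2)" using m unfolding reflexive_rel_def mem2_iff by simp
  then show ?thesis using mal X R unfolding is_maltsev_def by blast
qed


lemma equiv_rel2: "equiv_rel C X R \<Longrightarrow> rel2 C R X X"
  unfolding equiv_rel_def by blast

lemma equiv_obj: "equiv_rel C X (r1, r2) \<Longrightarrow> X \<in> Obj C"
  using rel2_homs[OF equiv_rel2] hom_obj by blast

lemma meet_constr:
  assumes A: "equiv_rel C X (a1, a2)" and B: "equiv_rel C X (b1, b2)"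
  obtains n1 n2 where "is_eq_meet C X (a1, a2) (b1, b2) (n1, n2)"
    "\<And>W x y. mem2 W (x, y) (n1, n2) \<longleftrightarrow> mem2 W (x, y) (a1, a2) \<and> mem2 W (x, y) (b1, b2)"
proof -
  have X: "X \<in> Obj C" using equiv_obj[OF A] .
  obtain n1 n2 where N: "rel2 C (n1, n2) X X"
    and Ni: "\<And>W x y. mem2 W (x, y) (n1, n2) \<longleftrightarrow> mem2 W (x, y) (a1, a2) \<and> mem2 W (x, y) (b1, b2)"
    by (rule intersection[OF equiv_rel2[OF A] equiv_rel2[OF B]]) (rule that; assumption)
  have NE: "equiv_rel C X (n1, n2)"
    by (rule refl_equiv[OF N]) (simp add: Ni eq_refl[OF A id_hom[OF X]] eq_refl[OF B id_hom[OF X]])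
  have "is_eq_meet C X (a1, a2) (b1, b2) (n1, n2)"
    unfolding is_eq_meet_def
  proof (intro conjI NE allI impI)
    show "rel_le C (n1, n2) (a1, a2)" by (rule mem_le[OF N]) (simp add: Ni)
    show "rel_le C (n1, n2) (b1, b2)" by (rule mem_le[OF N]) (simp add: Ni)
  next
    fix K assume H: "equiv_rel C X K \<and> rel_le C K (a1, a2) \<and> rel_le C K (b1, b2)"
    obtain k1 k2 where K: "K = (k1, k2)" by (cases K)
    have KE: "rel2 C (k1, k2) X X" using H K equiv_rel2 by blast
    show "rel_le C K (n1, n2)" unfolding K
    proof (rule mem_le[OF KE])
      fix W x y assume m: "mem2 W (x, y) (k1, k2)"
      show "mem2 W (x, y) (n1, n2)" unfolding Ni
        using le_mem[OF _ KE equiv_rel2[OF A] m] le_mem[OF _ KE equiv_rel2[OF B] m] H K by blast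
    qed
  qed
  from this Ni show ?thesis by (rule that)
qed

lemma join_constr:
  assumes B: "equiv_rel C X (b1, b2)" and D: "equiv_rel C X (d1, d2)"
  obtains k1 k2 where "is_eq_join C X (b1, b2) (d1, d2) (k1, k2)"
    "\<And>W x z. mem2 W (x, z) (k1, k2) \<Longrightarrow> \<exists>W' e y. hom C e W' W \<and> regular_epi C e \<and>
        mem2 W' (x \<cdot> e, y) (b1, b2) \<and> mem2 W' (y, z \<cdot> e) (d1, d2)"
proof -
  have X: "X \<in> Obj C" using equiv_obj[OF B] .
  obtain k1 k2 where K: "rel2 C (k1, k2) X X"
    and Ki: "\<And>W x y z. mem2 W (x, y) (b1, b2) \<Longrightarrow> mem2 W (y, z) (d1, d2) \<Longrightarrow> mem2 W (x, z) (k1, k2)"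
    and Ke: "\<And>W x z. mem2 W (x, z) (k1, k2) \<Longrightarrow> \<exists>W' e y. hom C e W' W \<and> regular_epi C e \<and>
        mem2 W' (x \<cdot> e, y) (b1, b2) \<and> mem2 W' (y, z \<cdot> e) (d1, d2)"
    by (rule composite[OF equiv_rel2[OF B] equiv_rel2[OF D]]) (rule that; assumption)
  have KE: "equiv_rel C X (k1, k2)"
    by (rule refl_equiv[OF K]) (rule Ki[OF eq_refl[OF B id_hom[OF X]] eq_refl[OF D id_hom[OF X]]])
  have "is_eq_join C X (b1, b2) (d1, d2) (k1, k2)"
    unfolding is_eq_join_def
  proof (intro conjI KE allI impI)
    show "rel_le C (b1, b2) (k1, k2)"
    proof (rule mem_le[OF equiv_rel2[OF B]])
      fix W x y assume m: "mem2 W (x, y) (b1, b2)"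
      have "hom C y W X" using mem2_hom[OF equiv_rel2[OF B] m] by simp
      then show "mem2 W (x, y) (k1, k2)" using Ki[OF m eq_refl[OF D]] by blast
    qed
    show "rel_le C (d1, d2) (k1, k2)"
    proof (rule mem_le[OF equiv_rel2[OF D]])
      fix W x y assume m: "mem2 W (x, y) (d1, d2)"
      have "hom C x W X" using mem2_hom[OF equiv_rel2[OF D] m] by simp
      then show "mem2 W (x, y) (k1, k2)" using Ki[OF eq_refl[OF B] m] by blast
    qed
  next
    fix N assume H: "equiv_rel C X N \<and> rel_le C (b1, b2) N \<and> rel_le C (d1, d2) N"
    obtain n1 n2 where Nn: "N = (n1, n2)" by (cases N)
    have NE: "equiv_rel C X (n1, n2)" using H Nn by simp
    have le1: "rel_le C (b1, b2) (n1, n2)" and le2: "rel_le C (d1, d2) (n1, n2)" using H Nn by simp_all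
    show "rel_le C (k1, k2) N" unfolding Nn
    proof (rule mem_le[OF K])
      fix W x z assume m: "mem2 W (x, z) (k1, k2)"
      have x: "hom C x W X" and z: "hom C z W X" using mem2_hom[OF K m] by auto
      obtain W' e y where e: "hom C e W' W" "regular_epi C e" "mem2 W' (x \<cdot> e, y) (b1, b2)"
        "mem2 W' (y, z \<cdot> e) (d1, d2)" using Ke[OF m] by blast
      have "mem2 W' (x \<cdot> e, y) (n1, n2)" using le_mem[OF le1 equiv_rel2[OF B] equiv_rel2[OF NE] e(3)] .
      moreover have "mem2 W' (y, z \<cdot> e) (n1, n2)" using le_mem[OF le2 equiv_rel2[OF D] equiv_rel2[OF NE] e(4)] .
      ultimately have "mem2 W' (x \<cdot> e, z \<cdot> e) (n1, n2)" using eq_trans[OF NE] by blast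
      then show "mem2 W (x, z) (n1, n2)" using descend2[OF equiv_rel2[OF NE] e(2) e(1) x z] by blast
    qed
  qed
  from this Ke show ?thesis by (rule that)
qed

lemma join_intro1:
  assumes J: "is_eq_join C X (b1, b2) D (j1, j2)" and B: "rel2 C (b1, b2) X X" and m: "mem2 W (x, y) (b1, b2)"
  shows "mem2 W (x, y) (j1, j2)"
proof -
  have "rel_le C (b1, b2) (j1, j2)" "rel2 C (j1, j2) X X" using J unfolding is_eq_join_def equiv_rel_def by auto
  then show ?thesis using le_mem B m by blast
qed

lemma join_intro2:
  assumes J: "is_eq_join C X B (d1, d2) (j1, j2)" and D: "rel2 C (d1, d2) X X" and m: "mem2 W (x, y) (d1, d2)"
  shows "mem2 W (x, y) (j1, j2)"
proof -
  have "rel_le C (d1, d2) (j1, j2)" "rel2 C (j1, j2) X X" using J unfolding is_eq_join_def equiv_rel_def by auto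
  then show ?thesis using le_mem D m by blast
qed

lemma join_elim:
  assumes J: "is_eq_join C X (b1, b2) (d1, d2) (j1, j2)" and B: "equiv_rel C X (b1, b2)"
    and D: "equiv_rel C X (d1, d2)" and m: "mem2 W (x, z) (j1, j2)"
  shows "\<exists>W' e y. hom C e W' W \<and> regular_epi C e \<and>
        mem2 W' (x \<cdot> e, y) (b1, b2) \<and> mem2 W' (y, z \<cdot> e) (d1, d2)"
proof -
  obtain k1 k2 where K: "is_eq_join C X (b1, b2) (d1, d2) (k1, k2)"
    and Ke: "\<And>W x z. mem2 W (x, z) (k1, k2) \<Longrightarrow> \<exists>W' e y. hom C e W' W \<and> regular_epi C e \<and>
        mem2 W' (x \<cdot> e, y) (b1, b2) \<and> mem2 W' (y, z \<cdot> e) (d1, d2)"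
    by (rule join_constr[OF B D]) (rule that; assumption)
  have KE: "equiv_rel C X (k1, k2)" "rel_le C (b1, b2) (k1, k2)" "rel_le C (d1, d2) (k1, k2)"
    using K unfolding is_eq_join_def by auto
  have "rel_le C (j1, j2) (k1, k2)" using J KE unfolding is_eq_join_def by blast
  moreover have "rel2 C (j1, j2) X X" using J unfolding is_eq_join_def equiv_rel_def by auto
  ultimately have "mem2 W (x, z) (k1, k2)" using le_mem m equiv_rel2[OF KE(1)] by blast
  then show ?thesis using Ke by blast
qed

lemma meet_intro:
  assumes M: "is_eq_meet C X (a1, a2) (b1, b2) (m1, m2)" and A: "equiv_rel C X (a1, a2)"
    and B: "equiv_rel C X (b1, b2)" and ma: "mem2 W (x, y) (a1, a2)" and mb: "mem2 W (x, y) (b1, b2)"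
  shows "mem2 W (x, y) (m1, m2)"
proof -
  obtain n1 n2 where N: "is_eq_meet C X (a1, a2) (b1, b2) (n1, n2)"
    and Ni: "\<And>W x y. mem2 W (x, y) (n1, n2) \<longleftrightarrow> mem2 W (x, y) (a1, a2) \<and> mem2 W (x, y) (b1, b2)"
    by (rule meet_constr[OF A B]) (rule that; assumption)
  have NE: "equiv_rel C X (n1, n2)" "rel_le C (n1, n2) (a1, a2)" "rel_le C (n1, n2) (b1, b2)"
    using N unfolding is_eq_meet_def by auto
  have "rel_le C (n1, n2) (m1, m2)" using M NE unfolding is_eq_meet_def by blast
  moreover have "rel2 C (m1, m2) X X" using M unfolding is_eq_meet_def equiv_rel_def by auto
  moreover have "mem2 W (x, y) (n1, n2)" using Ni ma mb by blast
  ultimately show ?thesis using le_mem equiv_rel2[OF NE(1)] by blast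
qed

lemma meet_elim:
  assumes M: "is_eq_meet C X (a1, a2) (b1, b2) (m1, m2)" and A: "rel2 C (a1, a2) X X"
    and B: "rel2 C (b1, b2) X X" and m: "mem2 W (x, y) (m1, m2)"
  shows "mem2 W (x, y) (a1, a2)" "mem2 W (x, y) (b1, b2)"
proof -
  have "rel_le C (m1, m2) (a1, a2)" "rel_le C (m1, m2) (b1, b2)" "rel2 C (m1, m2) X X"
    using M unfolding is_eq_meet_def equiv_rel_def by auto
  then show "mem2 W (x, y) (a1, a2)" "mem2 W (x, y) (b1, b2)" using le_mem A B m by blast+
qed


end

context regcat
begin

lemma ternary:
  assumes A: "rel2 C (a1, a2) X X" and B: "rel2 C (b1, b2) X X" and D: "rel2 C (d1, d2) X X"
  obtains t1 t2 t3 where "rel3 C (t1, t2, t3) X X X"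
    "\<And>W p0 q0 r0 w. mem2 W (p0, w) (b1, b2) \<Longrightarrow> mem2 W (q0, w) (a1, a2) \<Longrightarrow> mem2 W (w, r0) (d1, d2)
       \<Longrightarrow> mem3 C W (p0, q0, r0) (t1, t2, t3)"
    "\<And>W p0 q0 r0. mem3 C W (p0, q0, r0) (t1, t2, t3) \<Longrightarrow> \<exists>W' e w. hom C e W' W \<and> regular_epi C e \<and>
       mem2 W' (p0 \<cdot> e, w) (b1, b2) \<and> mem2 W' (q0 \<cdot> e, w) (a1, a2) \<and> mem2 W' (w, r0 \<cdot> e) (d1, d2)"
proof -
  note a = rel2_homs[OF A] and b = rel2_homs[OF B] and d = rel2_homs[OF D]
  obtain p q where pb1: "is_pullback C b2 d1 p q" using pb_ex[OF b(2) d(1)] by blast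
  note P1 = pbD[OF pb1]
  have db: "Dom C b2 = Dom C b1" using b(2) homD by auto
  have p: "hom C p (Dom C p) (Dom C b1)" and q: "hom C q (Dom C p) (Dom C d1)" using P1(1,2) db by simp_all
  have bp: "hom C (b2 \<cdot> p) (Dom C p) X" using comp_hom[OF p b(2)] .
  obtain p' q' where pb2: "is_pullback C (b2 \<cdot> p) a2 p' q'" using pb_ex[OF bp a(2)] by blast
  note P2 = pbD[OF pb2]
  have dbp: "Dom C (b2 \<cdot> p) = Dom C p" using bp homD by auto
  have da: "Dom C a2 = Dom C a1" using a(2) homD by auto
  have p': "hom C p' (Dom C p') (Dom C p)" and q': "hom C q' (Dom C p') (Dom C a1)"
    using P2(1,2) dbp da by simp_all
  have E1: "b2 \<cdot> p = d1 \<cdot> q" using P1(3) .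
  have E2: "(b2 \<cdot> p) \<cdot> p' = a2 \<cdot> q'" using P2(3) .
  have pp: "hom C (p \<cdot> p') (Dom C p') (Dom C b1)" using comp_hom[OF p' p] .
  have qp: "hom C (q \<cdot> p') (Dom C p') (Dom C d1)" using comp_hom[OF p' q] .
  obtain t1 t2 t3 where T: "rel3 C (t1, t2, t3) X X X"
    and Tm: "\<And>W t. hom C t W (Dom C p') \<Longrightarrow> mem3 C W ((b1 \<cdot> (p \<cdot> p')) \<cdot> t, (a1 \<cdot> q') \<cdot> t, (d2 \<cdot> (q \<cdot> p')) \<cdot> t) (t1, t2, t3)"
    and Tc: "\<And>W x y z. mem3 C W (x, y, z) (t1, t2, t3) \<Longrightarrow>
       \<exists>W' e t. hom C e W' W \<and> regular_epi C e \<and> hom C t W' (Dom C p') \<and> (b1 \<cdot> (p \<cdot> p')) \<cdot> t = x \<cdot> e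
          \<and> (a1 \<cdot> q') \<cdot> t = y \<cdot> e \<and> (d2 \<cdot> (q \<cdot> p')) \<cdot> t = z \<cdot> e"
    by (rule img3[OF comp_hom[OF pp b(1)] comp_hom[OF q' a(1)] comp_hom[OF qp d(2)]]) (rule that; assumption)
  have intro: "mem3 C W (p0, q0, r0) (t1, t2, t3)"
    if mb: "mem2 W (p0, w) (b1, b2)" and ma: "mem2 W (q0, w) (a1, a2)" and md: "mem2 W (w, r0) (d1, d2)"
    for W p0 q0 r0 w
  proof -
    obtain ub where ub: "hom C ub W (Dom C b1)" "b1 \<cdot> ub = p0" "b2 \<cdot> ub = w" using mb unfolding mem2_iff by blast
    obtain ua where ua: "hom C ua W (Dom C a1)" "a1 \<cdot> ua = q0" "a2 \<cdot> ua = w" using ma unfolding mem2_iff by blast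
    obtain ud where ud: "hom C ud W (Dom C d1)" "d1 \<cdot> ud = w" "d2 \<cdot> ud = r0" using md unfolding mem2_iff by blast
    have ub': "hom C ub W (Dom C b2)" using ub(1) db by simp
    obtain h1 where h1: "hom C h1 W (Dom C p)" "p \<cdot> h1 = ub" "q \<cdot> h1 = ud"
      using pb_lift[OF pb1 ub' ud(1)] ub(3) ud(2) by metis
    have h1': "hom C h1 W (Dom C (b2 \<cdot> p))" using h1(1) dbp by simp
    have ua': "hom C ua W (Dom C a2)" using ua(1) da by simp
    have "(b2 \<cdot> p) \<cdot> h1 = a2 \<cdot> ua" using assoc[OF h1(1) p b(2)] h1(2) ub(3) ua(3) by simp
    then obtain h2 where h2: "hom C h2 W (Dom C p')" "p' \<cdot> h2 = h1" "q' \<cdot> h2 = ua"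
      using pb_lift[OF pb2 h1' ua'] by metis
    have "(b1 \<cdot> (p \<cdot> p')) \<cdot> h2 = p0"
      using assoc[OF h2(1) pp b(1)] assoc[OF h2(1) p' p] h2(2) h1(2) ub(2) by simp
    moreover have "(a1 \<cdot> q') \<cdot> h2 = q0" using assoc[OF h2(1) q' a(1)] h2(3) ua(2) by simp
    moreover have "(d2 \<cdot> (q \<cdot> p')) \<cdot> h2 = r0"
      using assoc[OF h2(1) qp d(2)] assoc[OF h2(1) p' q] h2(2) h1(3) ud(3) by simp
    ultimately show ?thesis using Tm[OF h2(1)] by simp
  qed
  have elim: "\<exists>W' e w. hom C e W' W \<and> regular_epi C e \<and>
       mem2 W' (p0 \<cdot> e, w) (b1, b2) \<and> mem2 W' (q0 \<cdot> e, w) (a1, a2) \<and> mem2 W' (w, r0 \<cdot> e) (d1, d2)"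
    if m: "mem3 C W (p0, q0, r0) (t1, t2, t3)" for W p0 q0 r0
  proof -
    obtain W' e t where e: "hom C e W' W" "regular_epi C e" "hom C t W' (Dom C p')"
      "(b1 \<cdot> (p \<cdot> p')) \<cdot> t = p0 \<cdot> e" "(a1 \<cdot> q') \<cdot> t = q0 \<cdot> e" "(d2 \<cdot> (q \<cdot> p')) \<cdot> t = r0 \<cdot> e"
      using Tc[OF m] by blast
    have pt: "hom C (p' \<cdot> t) W' (Dom C p)" using comp_hom[OF e(3) p'] .
    have ppt: "hom C (p \<cdot> (p' \<cdot> t)) W' (Dom C b1)" using comp_hom[OF pt p] .
    have qpt: "hom C (q \<cdot> (p' \<cdot> t)) W' (Dom C d1)" using comp_hom[OF pt q] .
    have qt: "hom C (q' \<cdot> t) W' (Dom C a1)" using comp_hom[OF e(3) q'] .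
    have w1: "b2 \<cdot> (p \<cdot> (p' \<cdot> t)) = a2 \<cdot> (q' \<cdot> t)"
      using eq_ext[OF E2 e(3) p' bp q' a(2)] assoc[OF pt p b(2)] by simp
    have w2: "d1 \<cdot> (q \<cdot> (p' \<cdot> t)) = a2 \<cdot> (q' \<cdot> t)"
      using eq_ext[OF E1 pt p b(2) q d(1)] w1 by simp
    have "b1 \<cdot> (p \<cdot> (p' \<cdot> t)) = p0 \<cdot> e"
      using assoc[OF e(3) pp b(1)] assoc[OF e(3) p' p] e(4) by simp
    then have MB: "mem2 W' (p0 \<cdot> e, a2 \<cdot> (q' \<cdot> t)) (b1, b2)" unfolding mem2_iff using ppt w1 by blast
    have "a1 \<cdot> (q' \<cdot> t) = q0 \<cdot> e" using assoc[OF e(3) q' a(1)] e(5) by simp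
    then have MA: "mem2 W' (q0 \<cdot> e, a2 \<cdot> (q' \<cdot> t)) (a1, a2)" unfolding mem2_iff using qt by blast
    have "d2 \<cdot> (q \<cdot> (p' \<cdot> t)) = r0 \<cdot> e"
      using assoc[OF e(3) qp d(2)] assoc[OF e(3) p' q] e(6) by simp
    then have MD: "mem2 W' (a2 \<cdot> (q' \<cdot> t), r0 \<cdot> e) (d1, d2)" unfolding mem2_iff using qpt w2 by blast
    show ?thesis using e(1,2) MB MA MD by blast
  qed
  from T intro elim show ?thesis by (rule that)
qed


end

context rm
begin

lemma kernel_equiv:
  assumes f: "hom C f P Q"
  obtains k1 k2 where "equiv_rel C P (k1, k2)"
    "\<And>W a b. mem2 W (a, b) (k1, k2) \<longleftrightarrow> hom C a W P \<and> hom C b W P \<and> f \<cdot> a = f \<cdot> b"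
proof -
  obtain k1 k2 where K: "rel2 C (k1, k2) P P"
    and Ki: "\<And>W a b. mem2 W (a, b) (k1, k2) \<longleftrightarrow> hom C a W P \<and> hom C b W P \<and> f \<cdot> a = f \<cdot> b"
    by (rule kernel_rel[OF f]) (rule that; assumption)
  have PO: "P \<in> Obj C" using f hom_obj by blast
  have "equiv_rel C P (k1, k2)" by (rule refl_equiv[OF K]) (simp add: Ki id_hom[OF PO])
  from this Ki show ?thesis by (rule that)
qed

lemma cd_maj:
  assumes CD: "congruence_distributive C"
  shows "is_majority C"
  unfolding is_majority_def
proof (intro ballI allI impI)
  fix X Y Z R assume XO: "X \<in> Obj C" and YO: "Y \<in> Obj C" and ZO: "Z \<in> Obj C" and R: "rel3 C R X Y Z"
  obtain r1 r2 r3 where Rr: "R = (r1, r2, r3)" by (cases R) auto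
  have RR: "rel3 C (r1, r2, r3) X Y Z" using R Rr by simp
  have r: "hom C r1 (Dom C r1) X" "hom C r2 (Dom C r1) Y" "hom C r3 (Dom C r1) Z"
    using RR unfolding rel3_iff by auto
  define R0 where "R0 = Dom C r1"
  have R0: "R0 \<in> Obj C" using r(1) hom_obj R0_def by blast
  have r': "hom C r1 R0 X" "hom C r2 R0 Y" "hom C r3 R0 Z" using r R0_def by auto
  obtain k11 k12 where K1: "equiv_rel C R0 (k11, k12)"
    and K1i: "\<And>W a b. mem2 W (a, b) (k11, k12) \<longleftrightarrow> hom C a W R0 \<and> hom C b W R0 \<and> r1 \<cdot> a = r1 \<cdot> b"
    by (rule kernel_equiv[OF r'(1)]) (rule that; assumption)
  obtain k21 k22 where K2: "equiv_rel C R0 (k21, k22)"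
    and K2i: "\<And>W a b. mem2 W (a, b) (k21, k22) \<longleftrightarrow> hom C a W R0 \<and> hom C b W R0 \<and> r2 \<cdot> a = r2 \<cdot> b"
    by (rule kernel_equiv[OF r'(2)]) (rule that; assumption)
  obtain k31 k32 where K3: "equiv_rel C R0 (k31, k32)"
    and K3i: "\<And>W a b. mem2 W (a, b) (k31, k32) \<longleftrightarrow> hom C a W R0 \<and> hom C b W R0 \<and> r3 \<cdot> a = r3 \<cdot> b"
    by (rule kernel_equiv[OF r'(3)]) (rule that; assumption)
  have cd1: "\<And>A B. equiv_rel C R0 A \<and> equiv_rel C R0 B \<Longrightarrow>
          (\<exists>M. is_eq_meet C R0 A B M) \<and> (\<exists>J. is_eq_join C R0 A B J)"
    using CD R0 unfolding congruence_distributive_def by blast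
  have cd2: "\<And>A B D J M M1 M2 J'.
          equiv_rel C R0 A \<and> equiv_rel C R0 B \<and> equiv_rel C R0 D \<and>
          is_eq_join C R0 B D J \<and> is_eq_meet C R0 A J M \<and>
          is_eq_meet C R0 A B M1 \<and> is_eq_meet C R0 A D M2 \<and> is_eq_join C R0 M1 M2 J'
          \<Longrightarrow> rel_le C M J'"
    using CD R0 unfolding congruence_distributive_def by blast
  obtain J where J0: "is_eq_join C R0 (k21, k22) (k31, k32) J" using cd1[of "(k21, k22)" "(k31, k32)"] K2 K3 by blast
  obtain j1 j2 where Jj: "J = (j1, j2)" by (cases J)
  have JJ: "is_eq_join C R0 (k21, k22) (k31, k32) (j1, j2)" using J0 Jj by simp
  have JE: "equiv_rel C R0 (j1, j2)" using JJ unfolding is_eq_join_def by blast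
  obtain M where M0: "is_eq_meet C R0 (k11, k12) (j1, j2) M" using cd1[of "(k11, k12)" "(j1, j2)"] K1 JE by blast
  obtain m1 m2 where Mm: "M = (m1, m2)" by (cases M)
  have MM: "is_eq_meet C R0 (k11, k12) (j1, j2) (m1, m2)" using M0 Mm by simp
  have ME: "equiv_rel C R0 (m1, m2)" using MM unfolding is_eq_meet_def by blast
  obtain M1 where M10: "is_eq_meet C R0 (k11, k12) (k21, k22) M1" using cd1[of "(k11, k12)" "(k21, k22)"] K1 K2 by blast
  obtain n1 n2 where M1m: "M1 = (n1, n2)" by (cases M1)
  have MM1: "is_eq_meet C R0 (k11, k12) (k21, k22) (n1, n2)" using M10 M1m by simp
  have ME1: "equiv_rel C R0 (n1, n2)" using MM1 unfolding is_eq_meet_def by blast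
  obtain M2 where M20: "is_eq_meet C R0 (k11, k12) (k31, k32) M2" using cd1[of "(k11, k12)" "(k31, k32)"] K1 K3 by blast
  obtain o1 o2 where M2m: "M2 = (o1, o2)" by (cases M2)
  have MM2: "is_eq_meet C R0 (k11, k12) (k31, k32) (o1, o2)" using M20 M2m by simp
  have ME2: "equiv_rel C R0 (o1, o2)" using MM2 unfolding is_eq_meet_def by blast
  obtain J' where J'0: "is_eq_join C R0 (n1, n2) (o1, o2) J'" using cd1[of "(n1, n2)" "(o1, o2)"] ME1 ME2 by blast
  obtain l1 l2 where J'm: "J' = (l1, l2)" by (cases J')
  have JJ': "is_eq_join C R0 (n1, n2) (o1, o2) (l1, l2)" using J'0 J'm by simp
  have JE': "equiv_rel C R0 (l1, l2)" using JJ' unfolding is_eq_join_def by blast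
  have LE: "rel_le C (m1, m2) (l1, l2)"
    using cd2[of "(k11, k12)" "(k21, k22)" "(k31, k32)" "(j1, j2)" "(m1, m2)" "(n1, n2)" "(o1, o2)" "(l1, l2)"]
      K1 K2 K3 JJ MM MM1 MM2 JJ' by blast
  show "majority_selecting C R X Y Z"
    unfolding majority_selecting_def Rr
  proof (intro allI impI, elim conjE)
    fix S x x' y y' z z'
    assume SO: "S \<in> Obj C" and x: "hom C x S X" and x': "hom C x' S X" and y: "hom C y S Y"
      and y': "hom C y' S Y" and z: "hom C z S Z" and z': "hom C z' S Z"
      and m1: "mem3 C S (x, y, z') (r1, r2, r3)" and m2: "mem3 C S (x, y', z) (r1, r2, r3)"
      and m3: "mem3 C S (x', y, z) (r1, r2, r3)"
    obtain a where a: "hom C a S R0" "r1 \<cdot> a = x" "r2 \<cdot> a = y" "r3 \<cdot> a = z'"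
      using m1 unfolding mem3_iff R0_def by blast
    obtain b where b: "hom C b S R0" "r1 \<cdot> b = x" "r2 \<cdot> b = y'" "r3 \<cdot> b = z"
      using m2 unfolding mem3_iff R0_def by blast
    obtain c where c: "hom C c S R0" "r1 \<cdot> c = x'" "r2 \<cdot> c = y" "r3 \<cdot> c = z"
      using m3 unfolding mem3_iff R0_def by blast
    have ab1: "mem2 S (a, b) (k11, k12)" using K1i a b by simp
    have ac2: "mem2 S (a, c) (k21, k22)" using K2i a c by simp
    have cb3: "mem2 S (c, b) (k31, k32)" using K3i b c by simp
    have "mem2 S (a, c) (j1, j2)" using join_intro1[OF JJ equiv_rel2[OF K2] ac2] .
    moreover have "mem2 S (c, b) (j1, j2)" using join_intro2[OF JJ equiv_rel2[OF K3] cb3] .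
    ultimately have abJ: "mem2 S (a, b) (j1, j2)" using eq_trans[OF JE] by blast
    have abM: "mem2 S (a, b) (m1, m2)" using meet_intro[OF MM K1 JE ab1 abJ] .
    have abJ': "mem2 S (a, b) (l1, l2)" using le_mem[OF LE equiv_rel2[OF ME] equiv_rel2[OF JE'] abM] .
    obtain S' e s where e: "hom C e S' S" "regular_epi C e" "mem2 S' (a \<cdot> e, s) (n1, n2)"
      "mem2 S' (s, b \<cdot> e) (o1, o2)"
      using join_elim[OF JJ' ME1 ME2 abJ'] by blast
    have s1: "mem2 S' (a \<cdot> e, s) (k11, k12)" "mem2 S' (a \<cdot> e, s) (k21, k22)"
      using meet_elim[OF MM1 equiv_rel2[OF K1] equiv_rel2[OF K2] e(3)] by auto
    have s2: "mem2 S' (s, b \<cdot> e) (k31, k32)"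
      using meet_elim[OF MM2 equiv_rel2[OF K1] equiv_rel2[OF K3] e(4)] by auto
    have sh: "hom C s S' R0" and E1: "r1 \<cdot> (a \<cdot> e) = r1 \<cdot> s" using s1(1) K1i by auto
    have E2: "r2 \<cdot> (a \<cdot> e) = r2 \<cdot> s" using s1(2) K2i by auto
    have E3: "r3 \<cdot> s = r3 \<cdot> (b \<cdot> e)" using s2 K3i by auto
    have "r1 \<cdot> s = x \<cdot> e" using E1 assoc[OF e(1) a(1) r'(1)] a(2) by simp
    moreover have "r2 \<cdot> s = y \<cdot> e" using E2 assoc[OF e(1) a(1) r'(2)] a(3) by simp
    moreover have "r3 \<cdot> s = z \<cdot> e" using E3 assoc[OF e(1) b(1) r'(3)] b(4) by simp
    ultimately have "mem3 C S' (x \<cdot> e, y \<cdot> e, z \<cdot> e) (r1, r2, r3)"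
      unfolding mem3_iff using sh R0_def by auto
    then show "mem3 C S (x, y, z) (r1, r2, r3)" using descend3[OF RR e(2) e(1) x y z] by blast
  qed
qed


lemma maj_cd:
  assumes MAJ: "is_majority C"
  shows "congruence_distributive C"
  unfolding congruence_distributive_def
proof (intro ballI conjI)
  fix X assume XO: "X \<in> Obj C"
  show "\<forall>A B. equiv_rel C X A \<and> equiv_rel C X B \<longrightarrow>
          (\<exists>M. is_eq_meet C X A B M) \<and> (\<exists>J. is_eq_join C X A B J)"
  proof (intro allI impI)
  fix A B assume H: "equiv_rel C X A \<and> equiv_rel C X B"
  obtain a1 a2 where Aa: "A = (a1, a2)" by (cases A)
  obtain b1 b2 where Bb: "B = (b1, b2)" by (cases B)
  have AE: "equiv_rel C X (a1, a2)" and BE: "equiv_rel C X (b1, b2)" using H Aa Bb by auto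
  obtain n1 n2 where "is_eq_meet C X (a1, a2) (b1, b2) (n1, n2)"
    by (rule meet_constr[OF AE BE]) (rule that; assumption)
  moreover obtain k1 k2 where "is_eq_join C X (a1, a2) (b1, b2) (k1, k2)"
    by (rule join_constr[OF AE BE]) (rule that; assumption)
  ultimately show "(\<exists>M. is_eq_meet C X A B M) \<and> (\<exists>J. is_eq_join C X A B J)" using Aa Bb by blast
  qed
next
  fix X assume XO: "X \<in> Obj C"
  show "\<forall>A B D J M M1 M2 J'.
          equiv_rel C X A \<and> equiv_rel C X B \<and> equiv_rel C X D \<and>
          is_eq_join C X B D J \<and> is_eq_meet C X A J M \<and>
          is_eq_meet C X A B M1 \<and> is_eq_meet C X A D M2 \<and> is_eq_join C X M1 M2 J'
          \<longrightarrow> rel_le C M J'"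
  proof (intro allI impI)
  fix A B D J M M1 M2 J'
  assume H: "equiv_rel C X A \<and> equiv_rel C X B \<and> equiv_rel C X D \<and>
          is_eq_join C X B D J \<and> is_eq_meet C X A J M \<and>
          is_eq_meet C X A B M1 \<and> is_eq_meet C X A D M2 \<and> is_eq_join C X M1 M2 J'"
  obtain a1 a2 where Aa: "A = (a1, a2)" by (cases A)
  obtain b1 b2 where Bb: "B = (b1, b2)" by (cases B)
  obtain d1 d2 where Dd: "D = (d1, d2)" by (cases D)
  obtain j1 j2 where Jj: "J = (j1, j2)" by (cases J)
  obtain m1 m2 where Mm: "M = (m1, m2)" by (cases M)
  obtain n1 n2 where M1m: "M1 = (n1, n2)" by (cases M1)
  obtain o1 o2 where M2m: "M2 = (o1, o2)" by (cases M2)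
  obtain l1 l2 where J'm: "J' = (l1, l2)" by (cases J')
  have AE: "equiv_rel C X (a1, a2)" and BE: "equiv_rel C X (b1, b2)" and DE: "equiv_rel C X (d1, d2)"
    and JJ: "is_eq_join C X (b1, b2) (d1, d2) (j1, j2)" and MM: "is_eq_meet C X (a1, a2) (j1, j2) (m1, m2)"
    and MM1: "is_eq_meet C X (a1, a2) (b1, b2) (n1, n2)" and MM2: "is_eq_meet C X (a1, a2) (d1, d2) (o1, o2)"
    and JJ': "is_eq_join C X (n1, n2) (o1, o2) (l1, l2)"
    using H Aa Bb Dd Jj Mm M1m M2m J'm by auto
  have JE: "equiv_rel C X (j1, j2)" using JJ unfolding is_eq_join_def by blast
  have ME: "equiv_rel C X (m1, m2)" using MM unfolding is_eq_meet_def by blast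
  have ME1: "equiv_rel C X (n1, n2)" using MM1 unfolding is_eq_meet_def by blast
  have ME2: "equiv_rel C X (o1, o2)" using MM2 unfolding is_eq_meet_def by blast
  have JE': "equiv_rel C X (l1, l2)" using JJ' unfolding is_eq_join_def by blast
  note AR = equiv_rel2[OF AE] and BR = equiv_rel2[OF BE] and DR = equiv_rel2[OF DE]
  have gen: "mem2 (Dom C m1) (m1, m2) (m1, m2)" using mem_generic[OF equiv_rel2[OF ME]] .
  have mA: "mem2 (Dom C m1) (m1, m2) (a1, a2)" and mJ: "mem2 (Dom C m1) (m1, m2) (j1, j2)"
    using meet_elim[OF MM AR equiv_rel2[OF JE] gen] by auto
  obtain W' e y where e: "hom C e W' (Dom C m1)" "regular_epi C e" "mem2 W' (m1 \<cdot> e, y) (b1, b2)"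
    "mem2 W' (y, m2 \<cdot> e) (d1, d2)" using join_elim[OF JJ BE DE mJ] by blast
  define x where "x = m1 \<cdot> e"
  define z where "z = m2 \<cdot> e"
  have xyB: "mem2 W' (x, y) (b1, b2)" and yzD: "mem2 W' (y, z) (d1, d2)" using e(3,4) x_def z_def by auto
  have xzA: "mem2 W' (x, z) (a1, a2)" using mem2_pre[OF AR mA e(1)] x_def z_def by simp
  have x: "hom C x W' X" and z: "hom C z W' X" using mem2_hom[OF AR xzA] by auto
  have y: "hom C y W' X" using mem2_hom[OF BR xyB] by auto
  have W'O: "W' \<in> Obj C" using e(1) hom_obj by blast
  obtain t1 t2 t3 where T: "rel3 C (t1, t2, t3) X X X"
    and Ti: "\<And>W p0 q0 r0 w. mem2 W (p0, w) (b1, b2) \<Longrightarrow> mem2 W (q0, w) (a1, a2) \<Longrightarrow> mem2 W (w, r0) (d1, d2)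
       \<Longrightarrow> mem3 C W (p0, q0, r0) (t1, t2, t3)"
    and Te: "\<And>W p0 q0 r0. mem3 C W (p0, q0, r0) (t1, t2, t3) \<Longrightarrow> \<exists>W' e w. hom C e W' W \<and> regular_epi C e \<and>
       mem2 W' (p0 \<cdot> e, w) (b1, b2) \<and> mem2 W' (q0 \<cdot> e, w) (a1, a2) \<and> mem2 W' (w, r0 \<cdot> e) (d1, d2)"
    by (rule ternary[OF AR BR DR]) (rule that; assumption)
  have MS: "majority_selecting C (t1, t2, t3) X X X" using MAJ XO T unfolding is_majority_def by blast
  have h1: "mem3 C W' (x, x, x) (t1, t2, t3)"
    using Ti[OF eq_refl[OF BE x] eq_refl[OF AE x] eq_refl[OF DE x]] .
  have h2: "mem3 C W' (x, y, z) (t1, t2, t3)"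
    using Ti[OF xyB eq_refl[OF AE y] yzD] .
  have h3: "mem3 C W' (z, x, z) (t1, t2, t3)"
    using Ti[OF eq_refl[OF BE z] xzA eq_refl[OF DE z]] .
  have "mem3 C W' (x, x, z) (t1, t2, t3)"
    using MS W'O x y z h1 h2 h3 unfolding majority_selecting_def by blast
  then obtain W'' e2 w where e2: "hom C e2 W'' W'" "regular_epi C e2" "mem2 W'' (x \<cdot> e2, w) (b1, b2)"
    "mem2 W'' (x \<cdot> e2, w) (a1, a2)" "mem2 W'' (w, z \<cdot> e2) (d1, d2)" using Te by blast
  have xz2: "mem2 W'' (x \<cdot> e2, z \<cdot> e2) (a1, a2)" using mem2_pre[OF AR xzA e2(1)] .
  have wz: "mem2 W'' (w, z \<cdot> e2) (a1, a2)"
    using eq_trans[OF AE eq_sym[OF AE e2(4)] xz2] .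
  have "mem2 W'' (x \<cdot> e2, w) (n1, n2)" using meet_intro[OF MM1 AE BE e2(4) e2(3)] .
  then have "mem2 W'' (x \<cdot> e2, w) (l1, l2)" using join_intro1[OF JJ' equiv_rel2[OF ME1]] by blast
  moreover have "mem2 W'' (w, z \<cdot> e2) (o1, o2)" using meet_intro[OF MM2 AE DE wz e2(5)] .
  then have "mem2 W'' (w, z \<cdot> e2) (l1, l2)" using join_intro2[OF JJ' equiv_rel2[OF ME2]] by blast
  ultimately have "mem2 W'' (x \<cdot> e2, z \<cdot> e2) (l1, l2)" using eq_trans[OF JE'] by blast
  then have "mem2 W' (x, z) (l1, l2)" using descend2[OF equiv_rel2[OF JE'] e2(2) e2(1) x z] by blast
  then have "mem2 W' (m1 \<cdot> e, m2 \<cdot> e) (l1, l2)" using x_def z_def by simp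
  moreover have "hom C m1 (Dom C m1) X" "hom C m2 (Dom C m1) X" using rel2_homs[OF equiv_rel2[OF ME]] by auto
  ultimately have "mem2 (Dom C m1) (m1, m2) (l1, l2)" using descend2[OF equiv_rel2[OF JE'] e(2) e(1)] by blast
  then show "rel_le C M J'" using Mm J'm rel_le_iff by simp
  qed
qed

end

theorem corollary3p6:
  fixes C :: "('o, 'm) category"
  assumes "is_category C" and "is_regular C" and "is_maltsev C"
  shows "congruence_distributive C \<longleftrightarrow> is_majority C"
proof -
  interpret rm C using assms by (unfold_locales) auto
  show ?thesis using cd_maj maj_cd by blast
qed

end
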